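(* Consider the following network model. Let $q$ be a prime power, $K\ge1$, $L\ge1$, $N_{\mathrm S}\ge K$, $N_{\mathrm R}\ge1$. A source S draws $N_{\mathrm S}$ coefficient vectors i.i.d. uniformly from $\mathbb{F}_q^K$ and broadcasts one packet per vector. Each transmitted packet is erased on the link S$\to$D with probability $\epsilon_{\mathrm{SD}}$ and on the link S$\to\mathrm R_j$ with probability $\epsilon_{\mathrm{SR}_j}$ ($j=1,\dots,L$), all erasures independent across links and packets and independent of the coefficients. Relay $\mathrm R_j$, having received $m_j$ packets with coefficient matrix $\mathbf{C}_{\mathrm S\to\mathrm R_j}\in\mathbb{F}_q^{m_j\times K}$, draws $\mathbf{G}_j\in\mathbb{F}_q^{N_{\mathrm R}\times m_j}$ with i.i.d. uniform entries and transmits the $N_{\mathrm R}$ rows of $\mathbf{G}_j\mathbf{C}_{\mathrm S\to\mathrm R_j}$ to D, each independently erased with probability $\epsilon_{\mathrm R_j\mathrm D}$. D stacks all coefficient vectors it received (directly from S and from the relays) into $\mathbf{C}_{\mathrm D}$, and decoding succeeds iff $\operatorname{rank}(\mathbf{C}_{\mathrm D})=K$. Let $P^{(L)}_{\mathrm R}$ be the probability of successful decoding. Then $$P^{(L)}_{\mathrm R}\le \sum_{(m,m_{\mathrm D},m_{\mathrm{RD}})}\alpha(m,m_{\mathrm D},m_{\mathrm{RD}})\sum_{m'_1,\dots,m'_L}\prod_{j=1}^L\mathcal{B}(m'_j,N_{\mathrm R},\epsilon_{\mathrm R_j\mathrm D})\;\mathbb{P}^{(2)}\big(m'+m_{\mathrm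 D},\,m-m_{\mathrm{RD}}+m_{\mathrm D},\,m_{\mathrm D};K\big),$$ where $m'=\sum_{j}m'_j$, $\tilde\epsilon_{\mathrm{SR}}=\prod_{j=1}^L\epsilon_{\mathrm{SR}_j}$, $$\alpha(m,m_{\mathrm D},m_{\mathrm{RD}})=\binom{N_{\mathrm S}}{m_{\mathrm{RD}}}\binom{N_{\mathrm S}-m_{\mathrm{RD}}}{m-m_{\mathrm{RD}}}\binom{N_{\mathrm S}-m}{m_{\mathrm D}-m_{\mathrm{RD}}}(1-\tilde\epsilon_{\mathrm{SR}})^{m}\tilde\epsilon_{\mathrm{SR}}^{\,N_{\mathrm S}-m}(1-\epsilon_{\mathrm{SD}})^{m_{\mathrm D}}\epsilon_{\mathrm{SD}}^{\,N_{\mathrm S}-m_{\mathrm D}},$$ $\mathcal{B}(k,N,\epsilon)=\binom{N}{k}(1-\epsilon)^k\epsilon^{N-k}$, and the sums range over integers with $m+m_{\mathrm D}\ge K$, $m,m_{\mathrm D}\le N_{\mathrm S}$, $\max(0,m+m_{\mathrm D}-N_{\mathrm S})\le m_{\mathrm{RD}}\le\min(m,m_{\mathrm D})$, $0\le m'_j\le N_{\mathrm R}$ for all $j$, and $m'\ge K-m_{\mathrm D}$. Here $\mathbb{P}^{(2)}(m_1,m_2,m_{12};K)=\sum_{i=\max(0,K-m_1+m_{12},K-m_2+m_{12})}^{\min(m_{12},K)}\mathbb{P}_i(m_{12},K)\,\mathbb{P}(m_1-m_{12},K-i)\,\mathbb{P}(m_2-m_{12},K-i)$, $\mathbb{P}(a,b)=\prod_{i=0}^{b-1}(1-q^{i-a})$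 and $\mathbb{P}_r(a,b)=q^{-a(b-r)}\prod_{i=0}^{r-1}\frac{q^{b-i}-1}{q^{r-i}-1}\prod_{i=0}^{r-1}(1-q^{i-a})$.
   Context: In the summation, $m$ stands for the number of distinct source packets received by at least one relay, $m_{\mathrm D}$ for the number received by D from S, and $m_{\mathrm{RD}}$ for the number received both by D and by at least one relay. $\mathbb{P}(a,b)$ (resp. $\mathbb{P}_r(a,b)$) is the probability that a uniformly random $a\times b$ matrix over $\mathbb{F}_q$ has rank $b$ (resp. $r$). *)

theory Defs
  imports "HOL-Analysis.Analysis" "HOL-Probability.Probability"
begin

(* Rank of a matrix given as the list of its rows (vectors in F^K, K = CARD('k)).
   Same as the library's row-rank definition  rank A = vec.dim (rows A). *)
definition row_list_rank :: "('a::field ^ 'k) list \<Rightarrow> nat" where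
  "row_list_rank rs = vec.dim (set rs)"

primrec seq_pmf :: "'b pmf list \<Rightarrow> 'b list pmf" where
  "seq_pmf [] = return_pmf []"
| "seq_pmf (p # ps) = do {x \<leftarrow> p; xs \<leftarrow> seq_pmf ps; return_pmf (x # xs)}"

definition mat_mult_rows :: "'a list list \<Rightarrow> ('a::field ^ 'k) list \<Rightarrow> ('a ^ 'k) list" where
  "mat_mult_rows G C = map (\<lambda>g. \<Sum>i<length C. (g ! i) *s (C ! i)) G"

(* keep those entries of xs whose flag is True (non-erased packets) *)
definition received :: "'b list \<Rightarrow> bool list \<Rightarrow> 'b list" where
  "received xs flags = [xs ! i. i \<leftarrow> [0..<length xs], flags ! i]"

definition relay_pmf :: "nat \<Rightarrow> nat \<Rightarrow> real \<Rightarrow> real \<Rightarrow> ('a::{finite,field} ^ 'k) list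
                         \<Rightarrow> ('a ^ 'k) list pmf" where
  "relay_pmf NS NR eSR eRD C = do {
     sr \<leftarrow> replicate_pmf NS (bernoulli_pmf (1 - eSR));
     let Cj = received C sr;
     G \<leftarrow> replicate_pmf NR (replicate_pmf (length Cj) (pmf_of_set (UNIV :: 'a set)));
     rd \<leftarrow> replicate_pmf NR (bernoulli_pmf (1 - eRD));
     return_pmf (received (mat_mult_rows G Cj) rd)
   }"

definition network_pmf :: "nat \<Rightarrow> nat \<Rightarrow> nat \<Rightarrow> real \<Rightarrow> (nat \<Rightarrow> real) \<Rightarrow> (nat \<Rightarrow> real)
                           \<Rightarrow> ('a::{finite,field} ^ 'k) itself \<Rightarrow> bool pmf" where
  "network_pmf L NS NR eSD eSR eRD _ = do {
     C \<leftarrow> replicate_pmf NS (pmf_of_set (UNIV :: ('a ^ 'k) set));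
     sd \<leftarrow> replicate_pmf NS (bernoulli_pmf (1 - eSD));
     outs \<leftarrow> seq_pmf (map (\<lambda>j. relay_pmf NS NR (eSR j) (eRD j) C) [0..<L]);
     let CD = received C sd @ concat outs;
     return_pmf (row_list_rank CD = CARD('k))
   }"

definition success_prob :: "nat \<Rightarrow> nat \<Rightarrow> nat \<Rightarrow> real \<Rightarrow> (nat \<Rightarrow> real) \<Rightarrow> (nat \<Rightarrow> real)
                           \<Rightarrow> ('a::{finite,field} ^ 'k) itself \<Rightarrow> real" where
  "success_prob L NS NR eSD eSR eRD T = pmf (network_pmf L NS NR eSD eSR eRD T) True"

definition PP :: "real \<Rightarrow> nat \<Rightarrow> nat \<Rightarrow> real" where
  "PP q a b = (\<Prod>i<b. 1 - q powi (int i - int a))"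

definition Pr :: "real \<Rightarrow> nat \<Rightarrow> nat \<Rightarrow> nat \<Rightarrow> real" where
  "Pr q r a b = q powi (- (int a * (int b - int r)))
     * (\<Prod>i<r. (q ^ (b - i) - 1) / (q ^ (r - i) - 1))
     * (\<Prod>i<r. 1 - q powi (int i - int a))"

definition P2 :: "real \<Rightarrow> nat \<Rightarrow> nat \<Rightarrow> nat \<Rightarrow> nat \<Rightarrow> real" where
  "P2 q m1 m2 m12 K = (\<Sum>i \<in> {i::nat. int K - int m1 + int m12 \<le> int i
                                   \<and> int K - int m2 + int m12 \<le> int i \<and> i \<le> min m12 K}.
       Pr q i m12 K * PP q (m1 - m12) (K - i) * PP q (m2 - m12) (K - i))"

definition Bin :: "nat \<Rightarrow> nat \<Rightarrow> real \<Rightarrow> real" where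
  "Bin k N e = real (N choose k) * (1 - e) ^ k * e ^ (N - k)"

definition alpha :: "nat \<Rightarrow> nat \<Rightarrow> (nat \<Rightarrow> real) \<Rightarrow> real \<Rightarrow> nat \<Rightarrow> nat \<Rightarrow> nat \<Rightarrow> real" where
  "alpha L NS eSR eSD m mD mRD =
     (let et = (\<Prod>j<L. eSR j) in
      real (NS choose mRD) * real ((NS - mRD) choose (m - mRD)) * real ((NS - m) choose (mD - mRD))
      * (1 - et) ^ m * et ^ (NS - m) * (1 - eSD) ^ mD * eSD ^ (NS - mD))"

definition upper_bound :: "real \<Rightarrow> nat \<Rightarrow> nat \<Rightarrow> nat \<Rightarrow> nat \<Rightarrow> real \<Rightarrow> (nat \<Rightarrow> real)
                           \<Rightarrow> (nat \<Rightarrow> real) \<Rightarrow> real" where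
  "upper_bound q K L NS NR eSD eSR eRD =
    (\<Sum>(m, mD, mRD) \<in> {(m, mD, mRD). K \<le> m + mD \<and> m \<le> NS \<and> mD \<le> NS
                         \<and> int m + int mD - int NS \<le> int mRD \<and> mRD \<le> min m mD}.
       alpha L NS eSR eSD m mD mRD *
       (\<Sum>mp \<in> {mp \<in> PiE {..<L} (\<lambda>_. {..NR}). int K - int mD \<le> int (\<Sum>j<L. mp j)}.
          (\<Prod>j<L. Bin (mp j) NR (eRD j)) *
          P2 q ((\<Sum>j<L. mp j) + mD) (m - mRD + mD) mD K))"

end

theory Submission
  imports Defs
begin
abbreviation E :: "'b pmf \<Rightarrow> ('b \<Rightarrow> real) \<Rightarrow> real" where
  "E M f \<equiv> measure_pmf.expectation M f"

lemma E_bind: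
  fixes f :: "'c \<Rightarrow> real"
  assumes "\<And>y. \<bar>f y\<bar> \<le> B"
  shows "E (bind_pmf M N) f = E M (\<lambda>x. E (N x) f)"
  unfolding measure_pmf_bind
  by (rule integral_bind[where K="count_space UNIV" and B=B and B'=1])
     (auto simp: assms measure_pmf.emeasure_space_1 prob_space_imp_subprob_space
           measure_pmf.prob_space_axioms measure_pmf.finite_measure_axioms
           intro!: measure_pmf_in_subprob_algebra)

lemma E_mono:
  fixes f g :: "'c \<Rightarrow> real"
  assumes "\<And>y. \<bar>f y\<bar> \<le> B" "\<And>y. \<bar>g y\<bar> \<le> B"
    and "\<And>y. y \<in> set_pmf M \<Longrightarrow> f y \<le> g y"
  shows "E M f \<le> E M g"
proof -
  have i: "integrable M h" if "\<And>y. \<bar>h y\<bar> \<le> B" for h :: "'c \<Rightarrow> real"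
    by (rule measure_pmf.integrable_const_bound[where B=B]) (auto simp: that)
  show ?thesis
    by (rule integral_mono_AE) (auto simp: i assms AE_measure_pmf_iff)
qed

lemma E_cong:
  assumes "\<And>y. y \<in> set_pmf M \<Longrightarrow> f y = g y"
  shows "E M f = E M g"
  by (rule integral_cong_AE) (auto simp: assms AE_measure_pmf_iff)

lemma E_bound:
  fixes f :: "'c \<Rightarrow> real"
  assumes "\<And>y. \<bar>f y\<bar> \<le> B"
  shows "\<bar>E M f\<bar> \<le> B"
proof -
  have B: "0 \<le> B" using assms[of undefined] by linarith
  have "\<bar>E M f\<bar> \<le> E M (\<lambda>y. \<bar>f y\<bar>)" by (rule integral_abs_bound)
  also have "\<dots> \<le> E M (\<lambda>y. B)"
    by (rule E_mono[where B="B"]) (use assms B in auto)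
  finally show ?thesis by simp
qed

lemma E_swap:
  fixes f :: "'c \<Rightarrow> 'd \<Rightarrow> real"
  assumes "\<And>x y. \<bar>f x y\<bar> \<le> B"
  shows "E M (\<lambda>x. E N (\<lambda>y. f x y)) = E N (\<lambda>y. E M (\<lambda>x. f x y))"
proof -
  have "E (bind_pmf M (\<lambda>x. bind_pmf N (\<lambda>y. return_pmf (x,y)))) (case_prod f) = E M (\<lambda>x. E N (\<lambda>y. f x y))"
    apply (subst E_bind[where B=B]) using assms apply force
    apply (subst E_bind[where B=B]) using assms apply force by simp
  then have "E M (\<lambda>x. E N (\<lambda>y. f x y)) = E (bind_pmf M (\<lambda>x. bind_pmf N (\<lambda>y. return_pmf (x,y)))) (case_prod f)" by simp
  also have "\<dots> = E (bind_pmf N (\<lambda>y. bind_pmf M (\<lambda>x. return_pmf (x,y)))) (case_prod f)"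
    by (subst bind_commute_pmf) simp
  also have "\<dots> = E N (\<lambda>y. E M (\<lambda>x. f x y))"
    apply (subst E_bind[where B=B]) using assms apply force
    apply (subst E_bind[where B=B]) using assms apply force by simp
  finally show ?thesis .
qed

lemma PP_0_right[simp]: "PP q n 0 = 1" by (simp add: PP_def)

lemma PP_zero: "n < b \<Longrightarrow> q \<noteq> 0 \<Longrightarrow> PP q n b = 0"
  unfolding PP_def by (rule prod_zero) (auto intro!: bexI[where x=n])

lemma PP_Suc_right: "PP q n (Suc b) = PP q n b * (1 - q powi (int b - int n))"
  by (simp add: PP_def)

lemma PP_0_left: "q \<noteq> 0 \<Longrightarrow> PP q 0 b = (if b = 0 then 1 else 0)"
  using PP_zero[of 0 b q] by auto

lemma PP_nonneg: "q \<ge> 1 \<Longrightarrow> 0 \<le> PP q n b"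
proof (cases "b \<le> n")
  case True
  assume q: "q \<ge> 1"
  show ?thesis unfolding PP_def
  proof (rule prod_nonneg)
    fix i assume "i \<in> {..<b}"
    then have "int i - int n \<le> 0" using True by auto
    then have "q powi (int i - int n) \<le> q powi 0" using q by (intro power_int_increasing) auto
    then show "0 \<le> 1 - q powi (int i - int n)" by simp
  qed
next
  case False
  assume "q \<ge> 1" then show ?thesis using PP_zero[of n b q] False by simp
qed

lemma PP_le1: "q \<ge> 1 \<Longrightarrow> PP q n b \<le> 1"
proof (induction b)
  case 0 then show ?case by simp
next
  case (Suc b)
  have "0 < q powi (int b - int n)" using Suc.prems by simp
  then have f: "1 - q powi (int b - int n) \<le> 1" by simp
  show ?case
  proof (cases "int b - int n < 0")
    case True
    then have "q powi (int b - int n) \<le> q powi 0" using Suc.prems by (intro power_int_increasing) auto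
    then have "0 \<le> 1 - q powi (int b - int n)" by simp
    then show ?thesis unfolding PP_Suc_right using Suc PP_nonneg[of q n b] f
      by (metis mult_le_one)
  next
    case False
    then have "q powi (int b - int n) \<ge> q powi 0" using Suc.prems by (intro power_int_increasing) auto
    then have "1 - q powi (int b - int n) \<le> 0" by simp
    then show ?thesis unfolding PP_Suc_right using PP_nonneg[of q n b] Suc.prems
      by (smt (verit) mult_nonneg_nonpos)
  qed
qed

lemma PP_abs: "q \<ge> 1 \<Longrightarrow> \<bar>PP q n b\<bar> \<le> 1"
  using PP_nonneg PP_le1 by (simp add: abs_le_iff)

lemma PP_mono: "q \<ge> 1 \<Longrightarrow> PP q n (Suc b) \<le> PP q n b"
proof (cases "b < n")
  case True
  assume q: "q \<ge> 1"
  have "q powi (int b - int n) \<le> q powi 0" using q True by (intro power_int_increasing) auto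
  moreover have "0 < q powi (int b - int n)" using q by simp
  ultimately show ?thesis unfolding PP_Suc_right using PP_nonneg[OF q, of n b]
    by (simp add: mult_left_le)
next
  case False
  assume q: "q \<ge> 1"
  then show ?thesis using PP_zero[of n "Suc b" q] PP_nonneg[OF q, of n b] False by simp
qed

lemma PP_rec:
  assumes q: "q \<noteq> 0" and b: "b \<ge> 1"
  shows "PP q (Suc n) b = q powi (- int b) * PP q n b + (1 - q powi (- int b)) * PP q n (b - 1)"
proof -
  obtain c where c: "b = Suc c" using b by (cases b) auto
  define P where "P = (\<Prod>i<c. 1 - q powi (int (Suc i) - int (Suc n)))"
  have e1: "PP q (Suc n) b = (1 - q powi (- int (Suc n))) * P"
    unfolding PP_def c P_def by (subst prod.lessThan_Suc_shift) simp
  have e2: "PP q n b = P * (1 - q powi (int c - int n))"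
    unfolding PP_def c P_def by (simp add: prod.lessThan_Suc)
  have e3: "PP q n (b - 1) = P" unfolding PP_def c P_def by simp
  have x: "q powi (- int b) * q powi (int c - int n) = q powi (- int (Suc n))"
    using q c by (simp add: power_int_add[symmetric])
  show ?thesis unfolding e1 e2 e3
    using x by (simp add: algebra_simps)
qed

definition gq :: "real \<Rightarrow> nat \<Rightarrow> nat \<Rightarrow> real" where
  "gq q r b = (\<Prod>i<r. (q ^ (b - i) - 1) / (q ^ (r - i) - 1))"
definition hq :: "real \<Rightarrow> nat \<Rightarrow> nat \<Rightarrow> real" where
  "hq q r a = (\<Prod>i<r. 1 - q powi (int i - int a))"

lemma Pr_alt: "Pr q r a b = q powi (- (int a * (int b - int r))) * gq q r b * hq q r a"
  by (simp add: Pr_def gq_def hq_def)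

lemma gq_Suc:
  assumes q: "q > 1"
  shows "gq q (Suc c) b = gq q c b * ((q ^ (b - c) - 1) / (q ^ Suc c - 1))"
proof -
  have den: "(\<Prod>i<r. q ^ (r - i) - 1) = (\<Prod>j<r. q ^ Suc j - 1)" for r
  proof -
    have "(\<Prod>i<r. q ^ (r - i) - 1) = (\<Prod>i<r. (\<lambda>j. q ^ Suc j - 1) (r - Suc i))"
      by (intro prod.cong) (auto simp: Suc_diff_Suc)
    also have "\<dots> = (\<Prod>j<r. q ^ Suc j - 1)" by (rule prod.nat_diff_reindex)
    finally show ?thesis .
  qed
  have g: "gq q r b = (\<Prod>i<r. q ^ (b - i) - 1) / (\<Prod>j<r. q ^ Suc j - 1)" for r
    unfolding gq_def by (simp add: prod_dividef den)
  show ?thesis unfolding g by (simp add: prod.lessThan_Suc)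
qed

lemma hq_Suc: "hq q (Suc c) a = hq q c a * (1 - q powi (int c - int a))"
  by (simp add: hq_def)

lemma hq_Suc_Suc: "hq q (Suc c) (Suc a) = (1 - q powi (- int (Suc a))) * hq q c a"
  unfolding hq_def by (subst prod.lessThan_Suc_shift) simp

lemma Pr_zero_a: "a < r \<Longrightarrow> Pr q r a b = 0"
  unfolding Pr_alt hq_def by (simp add: prod_zero_iff) (auto intro!: bexI[where x=a])

lemma Pr_zero_b: "b < r \<Longrightarrow> Pr q r a b = 0"
  unfolding Pr_alt gq_def by (simp add: prod_zero_iff) (auto intro!: bexI[where x=b])

lemma Pr_0_left: "Pr q r 0 b = (if r = 0 then 1 else 0)"
  using Pr_zero_a[of 0 r q b] by (auto simp: Pr_def)

lemma Pr_rec0: "q \<noteq> 0 \<Longrightarrow> Pr q 0 (Suc a) b = q powi (- int b) * Pr q 0 a b"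
  by (simp add: Pr_def power_int_add[symmetric] algebra_simps)

lemma powi_neg_nat: "q powi (- int n) = 1 / (q::real) ^ n"
  by (simp add: power_int_minus divide_inverse)

lemma powi_eqI: "e = - int n \<Longrightarrow> q powi e = 1 / (q::real) ^ n"
  using powi_neg_nat by simp

lemma alg:
  fixes Z y w v q G H :: real
  assumes "y > 0" "w > 0" "v > 0" "q * v - 1 \<noteq> 0" "Z > 0" "q > 1"
  shows "1 / (Z * y) * (G * ((q * y - 1) / (q * v - 1))) * ((1 - 1 / (q * w)) * H) =
     1 / y * (1 / Z * (G * ((q * y - 1) / (q * v - 1))) * (H * (1 - v / w))) +
     (1 - 1 / (q * y)) * (1 / (Z * w) * G * H)"
proof -
  have "q > 0" using assms by simp
  then show ?thesis using assms by (simp add: field_simps)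
qed

lemma Pr_rec:
  assumes q: "q > 1" and cb: "c < b"
  shows "Pr q (Suc c) (Suc a) b = q powi (int (Suc c) - int b) * Pr q (Suc c) a b
          + (1 - q powi (int c - int b)) * Pr q c a b"
proof -
  define X where "X = gq q c b * hq q c a"
  define t where "t = (q ^ (b - c) - 1) / (q ^ Suc c - 1)"
  define Z where "Z = q ^ (a * (b - Suc c))"
  have q0: "q \<noteq> 0" using q by simp
  have Zp: "Z > 0" unfolding Z_def using q by simp
  have e1: "q powi (- (int (Suc a) * (int b - int (Suc c)))) = 1 / (Z * q ^ (b - Suc c))"
  proof -
    have s: "int (b - Suc c) = int b - int c - 1" using cb by simp
    have "int (a * (b - Suc c) + (b - Suc c)) = int a * int (b - Suc c) + int (b - Suc c)"
      by (simp only: of_nat_add of_nat_mult)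
    then have "int (Suc a) * (int b - int (Suc c)) = int (a * (b - Suc c) + (b - Suc c))"
      unfolding s by (simp add: algebra_simps)
    then have "q powi (- (int (Suc a) * (int b - int (Suc c)))) = 1 / q ^ (a * (b - Suc c) + (b - Suc c))"
      by (intro powi_eqI) linarith
    then show ?thesis unfolding Z_def by (simp only: power_add)
  qed
  have e2: "q powi (- (int a * (int b - int (Suc c)))) = 1 / Z"
  proof -
    have s: "int (b - Suc c) = int b - int c - 1" using cb by simp
    have "int (a * (b - Suc c)) = int a * int (b - Suc c)"
      by (simp only: of_nat_add of_nat_mult)
    then have "int a * (int b - int (Suc c)) = int (a * (b - Suc c))"
      unfolding s by (simp add: algebra_simps)
    then show ?thesis unfolding Z_def
      by (intro powi_eqI) linarith
  qed
  have e3: "q powi (- (int a * (int b - int c))) = 1 / (Z * q ^ a)"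
  proof -
    have s: "int (b - Suc c) = int b - int c - 1" using cb by simp
    have "int (a * (b - Suc c) + a) = int a * int (b - Suc c) + int a"
      by (simp only: of_nat_add of_nat_mult)
    then have "int a * (int b - int c) = int (a * (b - Suc c) + a)"
      unfolding s by (simp add: algebra_simps)
    then have "q powi (- (int a * (int b - int c))) = 1 / q ^ (a * (b - Suc c) + a)"
      by (intro powi_eqI) linarith
    then show ?thesis unfolding Z_def by (simp only: power_add)
  qed
  have e4: "q powi (int (Suc c) - int b) = 1 / q ^ (b - Suc c)"
  proof -
    have "int (Suc c) - int b = - int (b - Suc c)" using cb by simp
    then show ?thesis by (intro powi_eqI) linarith
  qed
  have e5: "q powi (- int (Suc a)) = 1 / (q * q ^ a)"
    by (subst powi_neg_nat) simp
  have e6: "q powi (int c - int a) = q ^ c / q ^ a"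
    using q0 by (simp add: power_int_diff)
  have e7: "q powi (int c - int b) = 1 / (q * q ^ (b - Suc c))"
  proof -
    have "int c - int b = - int (Suc (b - Suc c))" using cb by simp
    then have "q powi (int c - int b) = 1 / q ^ (Suc (b - Suc c))" by (intro powi_eqI) linarith
    then show ?thesis by simp
  qed
  have bc: "q ^ (b - c) = q * q ^ (b - Suc c)" using cb
    by (metis Suc_diff_Suc power_Suc)
  define y where "y = q ^ (b - Suc c)"
  define w where "w = q ^ a"
  define v where "v = q ^ c"
  have yp: "y > 0" "w > 0" "v > 0" unfolding y_def w_def v_def using q by auto
  have d: "q * v - 1 \<noteq> 0" unfolding v_def using q
    by (metis less_numeral_extra(4) one_less_power power_Suc right_minus_eq zero_less_Suc)
  have tt: "t = (q * y - 1) / (q * v - 1)" unfolding t_def y_def v_def using bc by simp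
  show ?thesis
    unfolding Pr_alt gq_Suc[OF q] hq_Suc_Suc
    unfolding hq_Suc
    unfolding e1 e2 e3 e4 e5 e6 e7 t_def[symmetric] tt
    unfolding y_def[symmetric] w_def[symmetric] v_def[symmetric]
    using yp d Zp q by (rule alg)
qed

lemma card_span_indep:
  fixes B :: "('a::{finite,field} ^ 'k) set"
  assumes "finite B" "vec.independent B"
  shows "card (vec.span B) = CARD('a) ^ card B"
  using assms
proof (induction B rule: finite_induct)
  case empty then show ?case by simp
next
  case (insert b B)
  have iB: "vec.independent B" and nb: "b \<notin> vec.span B"
    using insert.prems insert.hyps by (auto simp: vec.independent_insert)
  have img: "vec.span (insert b B) = (\<lambda>(t, v). t *s b + v) ` (UNIV \<times> vec.span B)"
  proof (intro set_eqI iffI)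
    fix x assume "x \<in> vec.span (insert b B)"
    then obtain k where "x - k *s b \<in> vec.span B" by (auto simp: vec.span_breakdown_eq)
    then show "x \<in> (\<lambda>(t, v). t *s b + v) ` (UNIV \<times> vec.span B)"
      by (intro image_eqI[where x="(k, x - k *s b)"]) auto
  next
    fix x assume "x \<in> (\<lambda>(t, v). t *s b + v) ` (UNIV \<times> vec.span B)"
    then obtain t v where "x = t *s b + v" "v \<in> vec.span B" by auto
    then show "x \<in> vec.span (insert b B)"
      unfolding vec.span_breakdown_eq by (intro exI[where x=t]) simp
  qed
  have inj: "inj_on (\<lambda>(t, v). t *s b + v) (UNIV \<times> vec.span B)"
  proof (rule inj_onI, clarsimp)
    fix t v t' v' assume v: "v \<in> vec.span B" "v' \<in> vec.span B" and e: "t *s b + v = t' *s b + v'"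
    have "(t - t') *s b = v' - v" using e by (simp add: vec.scale_left_diff_distrib algebra_simps)
    then have "(t - t') *s b \<in> vec.span B" using v by (simp add: vec.span_diff)
    have "t = t'"
    proof (rule ccontr)
      assume "t \<noteq> t'"
      then have "b = (inverse (t - t') * (t - t')) *s b" by simp
      also have "\<dots> = inverse (t - t') *s ((t - t') *s b)" by (simp only: vector_smult_assoc)
      also have "\<dots> \<in> vec.span B" using \<open>(t - t') *s b \<in> vec.span B\<close> by (rule vec.span_scale)
      finally show False using nb by simp
    qed
    then show "t = t' \<and> v = v'" using e by simp
  qed
  show ?case unfolding img card_image[OF inj]
    using insert.hyps iB insert.IH by (simp add: card_cartesian_product)
qed

lemma card_span:
  fixes S :: "('a::{finite,field} ^ 'k) set"
  shows "card (vec.span S) = CARD('a) ^ vec.dim S"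
proof -
  obtain B where B: "B \<subseteq> S" "vec.independent B" "S \<subseteq> vec.span B" "card B = vec.dim S"
    by (rule vec.basis_exists)
  have fB: "finite B" using B(2) vec.independent_bound_general by blast
  have "vec.span B = vec.span S"
    using B by (metis vec.span_mono vec.span_span subset_antisym vec.span_minimal vec.subspace_span)
  then show ?thesis using card_span_indep[OF fB B(2)] B(4) by simp
qed

lemma prob_uniform_span:
  fixes S :: "('a::{finite,field} ^ 'k) set"
  shows "measure_pmf.prob (pmf_of_set UNIV) (vec.span S)
           = real CARD('a) powi (int (vec.dim S) - int CARD('k))"
proof -
  have "measure_pmf.prob (pmf_of_set UNIV) (vec.span S) = card (vec.span S) / card (UNIV :: ('a^'k) set)"
    by (subst measure_pmf_of_set) auto
  also have "\<dots> = real CARD('a) ^ vec.dim S / real CARD('a) ^ CARD('k)"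
    by (simp add: card_span CARD_vec)
  also have "\<dots> = real CARD('a) powi (int (vec.dim S) - int CARD('k))"
    by (simp add: power_int_diff)
  finally show ?thesis .
qed

definition lin :: "'a list \<Rightarrow> ('a::field ^ 'k) list \<Rightarrow> 'a ^ 'k" where
  "lin g cs = (\<Sum>i<length cs. (g ! i) *s (cs ! i))"

lemma lin_Nil[simp]: "lin g [] = 0" by (simp add: lin_def)

lemma lin_Cons[simp]: "lin (t # g) (c # cs) = t *s c + lin g cs"
  unfolding lin_def length_Cons sum.lessThan_Suc_shift by simp

lemma lin_in_span: "lin g cs \<in> vec.span (set cs)"
  unfolding lin_def by (intro vec.span_sum vec.span_scale vec.span_base) auto

lemma E_uniform:
  "E (pmf_of_set (UNIV :: 'a::finite set)) f = (\<Sum>t\<in>UNIV. f t) / real CARD('a)"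
  by (subst integral_pmf_of_set) auto

lemma card_line:
  fixes c w :: "'a::{finite,field} ^ 'k"
  assumes "vec.subspace U" "c \<notin> U"
  shows "card {t. w + t *s c \<in> U} = (if w \<in> vec.span (insert c U) then 1 else 0)"
proof -
  have sU: "vec.span U = U" using assms(1) by (simp only: vec.span_eq_iff)
  have uniq: "t = t'" if "w + t *s c \<in> U" "w + t' *s c \<in> U" for t t'
  proof (rule ccontr)
    assume ne: "t \<noteq> t'"
    have "(w + t *s c) - (w + t' *s c) \<in> U" using that assms(1)
      by (intro vec.subspace_diff) auto
    moreover have "(w + t *s c) - (w + t' *s c) = (t - t') *s c"
      by (simp add: vec.scale_left_diff_distrib)
    ultimately have d: "(t - t') *s c \<in> U" by simp
    have "t - t' \<noteq> 0" using ne by simp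
    then have "c = (inverse (t - t') * (t - t')) *s c" by simp
    also have "\<dots> = inverse (t - t') *s ((t - t') *s c)" by (simp only: vector_smult_assoc)
    also have "\<dots> \<in> U" using d assms(1) by (rule vec.subspace_scale[rotated])
    finally show False using assms(2) by simp
  qed
  have ex: "(\<exists>t. w + t *s c \<in> U) \<longleftrightarrow> w \<in> vec.span (insert c U)"
  proof
    assume "\<exists>t. w + t *s c \<in> U"
    then obtain t where "w + t *s c \<in> U" by blast
    then have "w - (- t) *s c \<in> vec.span U" unfolding sU by simp
    then show "w \<in> vec.span (insert c U)" unfolding vec.span_breakdown_eq by blast
  next
    assume "w \<in> vec.span (insert c U)"
    then obtain k where "w - k *s c \<in> vec.span U" unfolding vec.span_breakdown_eq by blast
    then have "w + (- k) *s c \<in> U" unfolding sU by simp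
    then show "\<exists>t. w + t *s c \<in> U" by blast
  qed
  show ?thesis
  proof (cases "w \<in> vec.span (insert c U)")
    case True
    then obtain t where t: "w + t *s c \<in> U" using ex by blast
    have "{t. w + t *s c \<in> U} = {t}" using t uniq by blast
    then show ?thesis using True by simp
  next
    case False
    then have "{t. w + t *s c \<in> U} = {}" using ex by blast
    then show ?thesis using False by simp
  qed
qed

lemma of_bool_abs: "\<bar>of_bool P :: real\<bar> \<le> 1" by simp

lemma lin_prob:
  fixes S :: "('a::{finite,field} ^ 'k) set" and w :: "'a ^ 'k"
  shows "E (replicate_pmf (length cs) (pmf_of_set UNIV)) (\<lambda>g. of_bool (w + lin g cs \<in> vec.span S))
    = (if w \<in> vec.span (S \<union> set cs)
       then real CARD('a) ^ vec.dim S / real CARD('a) ^ vec.dim (S \<union> set cs) else 0)"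
proof (induction cs arbitrary: w)
  case Nil
  show ?case by simp
next
  case (Cons c cs)
  define q where "q = real CARD('a)"
  have q0: "q > 0" unfolding q_def by simp
  define X where "X = S \<union> set cs"
  define r where "r = q ^ vec.dim S / q ^ vec.dim X"
  have "E (replicate_pmf (length (c # cs)) (pmf_of_set UNIV)) (\<lambda>g. of_bool (w + lin g (c # cs) \<in> vec.span S))
      = E (pmf_of_set UNIV) (\<lambda>t. E (replicate_pmf (length cs) (pmf_of_set UNIV))
            (\<lambda>g. of_bool ((w + t *s c) + lin g cs \<in> vec.span S)))"
    apply (simp only: length_Cons replicate_pmf.simps)
    apply (subst E_bind[where B=1], rule of_bool_abs)
    apply (subst E_bind[where B=1], rule of_bool_abs)
    by (simp add: add.assoc)
  also have "\<dots> = E (pmf_of_set UNIV) (\<lambda>t. if w + t *s c \<in> vec.span X then r else 0)"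
    unfolding Cons.IH X_def r_def q_def ..
  also have "\<dots> = (\<Sum>t\<in>UNIV. if w + t *s c \<in> vec.span X then r else 0) / q"
    unfolding E_uniform q_def ..
  also have "\<dots> = r * card {t. w + t *s c \<in> vec.span X} / q"
    by (simp add: sum.If_cases Int_def)
  also have "\<dots> = (if w \<in> vec.span (S \<union> set (c # cs))
       then q ^ vec.dim S / q ^ vec.dim (S \<union> set (c # cs)) else 0)"
  proof (cases "c \<in> vec.span X")
    case True
    have sp: "vec.span (S \<union> set (c # cs)) = vec.span X"
      unfolding X_def using True X_def by (simp add: vec.span_redundant)
    have dm: "vec.dim (S \<union> set (c # cs)) = vec.dim X"
      using True by (simp add: X_def vec.dim_insert)
    have "{t. w + t *s c \<in> vec.span X} = (if w \<in> vec.span X then UNIV else {})"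
      using True by (auto simp: vec.span_add_eq vec.span_scale)
        (metis add_diff_cancel_right' vec.span_diff vec.span_scale)
    then show ?thesis unfolding sp dm using q0 by (simp add: q_def r_def)
  next
    case False
    have sp: "vec.span (S \<union> set (c # cs)) = vec.span (insert c (vec.span X))"
      unfolding X_def by (simp add: vec.span_insert vec.span_span)
    have dm: "vec.dim (S \<union> set (c # cs)) = Suc (vec.dim X)"
      using False by (simp add: X_def vec.dim_insert)
    show ?thesis unfolding sp dm card_line[OF vec.subspace_span False]
      using q0 by (simp add: r_def)
  qed
  finally show ?case unfolding q_def .
qed

lemma card_field_ge2: "CARD('a::{finite,field}) \<ge> 2"
proof -
  have "card {0::'a, 1} \<le> CARD('a)" by (rule card_mono) auto
  then show ?thesis by simp
qed

lemma q_gt1: "real CARD('a::{finite,field}) > 1"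
  using card_field_ge2[where 'a='a] by linarith

definition dom_pmf :: "('a::{finite,field} ^ 'k) pmf \<Rightarrow> bool" where
  "dom_pmf p \<longleftrightarrow> (\<forall>S. E p (\<lambda>x. of_bool (x \<in> vec.span S))
       \<ge> real CARD('a) powi (int (vec.dim S) - int CARD('k)))"

lemma E_of_bool_prob: "E p (\<lambda>x. of_bool (x \<in> A)) = measure_pmf.prob p A"
proof -
  have "E p (\<lambda>x. of_bool (x \<in> A)) = E p (indicator A)"
    by (rule arg_cong[where f="E p"]) (auto simp: indicator_def)
  then show ?thesis by simp
qed

lemma dom_uniform: "dom_pmf (pmf_of_set (UNIV :: ('a::{finite,field} ^ 'k) set))"
  unfolding dom_pmf_def E_of_bool_prob prob_uniform_span by simp

lemma dom_lin:
  fixes cs :: "('a::{finite,field} ^ 'k) list"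
  shows "dom_pmf (map_pmf (\<lambda>g. lin g cs) (replicate_pmf (length cs) (pmf_of_set UNIV)))"
  unfolding dom_pmf_def
proof
  fix S :: "('a ^ 'k) set"
  define q where "q = real CARD('a)"
  have q: "q > 1" unfolding q_def by (rule q_gt1)
  have "E (map_pmf (\<lambda>g. lin g cs) (replicate_pmf (length cs) (pmf_of_set UNIV))) (\<lambda>x. of_bool (x \<in> vec.span S))
     = E (replicate_pmf (length cs) (pmf_of_set UNIV)) (\<lambda>g. of_bool (0 + lin g cs \<in> vec.span S))"
    by simp
  also have "\<dots> = q ^ vec.dim S / q ^ vec.dim (S \<union> set cs)"
    unfolding lin_prob q_def by (simp add: vec.span_zero)
  also have "\<dots> \<ge> q ^ vec.dim S / q ^ CARD('k)"
    using q dim_subset_UNIV_cart_gen[of "S \<union> set cs"]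
    by (intro divide_left_mono power_increasing) auto
  finally show "E (map_pmf (\<lambda>g. lin g cs) (replicate_pmf (length cs) (pmf_of_set UNIV))) (\<lambda>x. of_bool (x \<in> vec.span S))
     \<ge> real CARD('a) powi (int (vec.dim S) - int CARD('k))"
    unfolding q_def using q_def q by (simp add: power_int_diff)
qed

lemma E_affine:
  fixes f :: "'b \<Rightarrow> real"
  assumes "\<And>x. \<bar>f x\<bar> \<le> B"
  shows "E p (\<lambda>x. a + f x * c) = a + E p f * c"
proof -
  have i: "integrable p f" by (rule measure_pmf.integrable_const_bound[where B=B]) (auto simp: assms)
  then show ?thesis by simp
qed

lemma step_gen:
  fixes S :: "('a::{finite,field} ^ 'k) set" and p :: "('a ^ 'k) pmf"
  assumes d: "vec.dim S < CARD('k)"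
  shows "E p (\<lambda>x. PP (real CARD('a)) N (CARD('k) - vec.dim (insert x S)))
    = PP (real CARD('a)) N (CARD('k) - vec.dim S - 1)
      + E p (\<lambda>x. of_bool (x \<in> vec.span S)) *
        (PP (real CARD('a)) N (CARD('k) - vec.dim S) - PP (real CARD('a)) N (CARD('k) - vec.dim S - 1))"
proof -
  have eq: "E p (\<lambda>x. PP (real CARD('a)) N (CARD('k) - vec.dim (insert x S)))
     = E p (\<lambda>x. PP (real CARD('a)) N (CARD('k) - vec.dim S - 1)
      + of_bool (x \<in> vec.span S) *
        (PP (real CARD('a)) N (CARD('k) - vec.dim S) - PP (real CARD('a)) N (CARD('k) - vec.dim S - 1)))"
    by (rule arg_cong[where f="E p"]) (auto simp: vec.dim_insert)
  show ?thesis unfolding eq by (rule E_affine[where B=1]) simp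
qed

lemma dim_full: "vec.dim (S :: ('a::field ^ 'k) set) \<ge> CARD('k) \<Longrightarrow> vec.dim (insert x S) = vec.dim S"
  using dim_subset_UNIV_cart_gen[of "insert x S"] by (auto simp: vec.dim_insert split: if_splits)

lemma step_le:
  fixes S :: "('a::{finite,field} ^ 'k) set" and p :: "('a ^ 'k) pmf"
  assumes dp: "dom_pmf p"
  shows "E p (\<lambda>x. PP (real CARD('a)) N (CARD('k) - vec.dim (insert x S)))
    \<le> PP (real CARD('a)) (Suc N) (CARD('k) - vec.dim S)"
proof (cases "vec.dim S < CARD('k)")
  case False
  then show ?thesis using dim_full[of S] by simp
next
  case True
  define q where "q = real CARD('a)"
  have q: "q > 1" unfolding q_def by (rule q_gt1)
  define b where "b = CARD('k) - vec.dim S - 1"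
  have b: "CARD('k) - vec.dim S = Suc b" using True b_def by simp
  have P: "E p (\<lambda>x. of_bool (x \<in> vec.span S)) \<ge> q powi (- int (Suc b))"
    using dp unfolding dom_pmf_def q_def
    by (metis True b diff_diff_cancel less_imp_le_nat minus_diff_eq of_nat_diff)
  have m: "PP q N (Suc b) - PP q N b \<le> 0" using PP_mono[of q N b] q by simp
  have "E p (\<lambda>x. PP q N (CARD('k) - vec.dim (insert x S)))
      = PP q N b + E p (\<lambda>x. of_bool (x \<in> vec.span S)) * (PP q N (Suc b) - PP q N b)"
    using step_gen[OF True, of p N] unfolding q_def b_def[symmetric] b by simp
  also have "\<dots> \<le> PP q N b + q powi (- int (Suc b)) * (PP q N (Suc b) - PP q N b)"
    using P m by (simp add: mult_right_mono_neg)
  also have "\<dots> = PP q (Suc N) (Suc b)"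
    using PP_rec[of q "Suc b" N] q by (simp add: algebra_simps)
  finally show ?thesis unfolding q_def b .
qed

lemma step_eq:
  fixes S :: "('a::{finite,field} ^ 'k) set"
  shows "E (pmf_of_set UNIV) (\<lambda>x. PP (real CARD('a)) N (CARD('k) - vec.dim (insert x S)))
    = PP (real CARD('a)) (Suc N) (CARD('k) - vec.dim S)"
proof (cases "vec.dim S < CARD('k)")
  case False
  then show ?thesis using dim_full[of S] by simp
next
  case True
  define q where "q = real CARD('a)"
  have q: "q > 1" unfolding q_def by (rule q_gt1)
  define b where "b = CARD('k) - vec.dim S - 1"
  have b: "CARD('k) - vec.dim S = Suc b" using True b_def by simp
  have P: "E (pmf_of_set UNIV) (\<lambda>x. of_bool (x \<in> vec.span S)) = q powi (- int (Suc b))"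
    unfolding E_of_bool_prob prob_uniform_span q_def
    by (metis True b diff_diff_cancel less_imp_le_nat minus_diff_eq of_nat_diff)
  have "E (pmf_of_set UNIV) (\<lambda>x. PP q N (CARD('k) - vec.dim (insert x S)))
      = PP q N b + E (pmf_of_set UNIV) (\<lambda>x. of_bool (x \<in> vec.span S)) * (PP q N (Suc b) - PP q N b)"
    using step_gen[OF True, of "pmf_of_set UNIV" N] unfolding q_def b_def[symmetric] b by simp
  also have "\<dots> = PP q (Suc N) (Suc b)"
    unfolding P using PP_rec[of q "Suc b" N] q by (simp add: algebra_simps)
  finally show ?thesis unfolding q_def b .
qed

lemma replicate_pmf_seq: "replicate_pmf n p = seq_pmf (replicate n p)"
  by (induction n) auto

lemma PP_abs_q: "\<bar>PP (real CARD('a::{finite,field})) n b\<bar> \<le> 1"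
  using q_gt1[where 'a='a] by (intro PP_abs) simp

lemma L_dom:
  fixes S :: "('a::{finite,field} ^ 'k) set"
  assumes "\<forall>p\<in>set ps. dom_pmf p"
  shows "E (seq_pmf ps) (\<lambda>B. PP (real CARD('a)) N (CARD('k) - vec.dim (S \<union> set B)))
          \<le> PP (real CARD('a)) (N + length ps) (CARD('k) - vec.dim S)"
  using assms
proof (induction ps arbitrary: S)
  case Nil
  then show ?case by simp
next
  case (Cons p ps)
  have "E (seq_pmf (p # ps)) (\<lambda>B. PP (real CARD('a)) N (CARD('k) - vec.dim (S \<union> set B)))
     = E p (\<lambda>x. E (seq_pmf ps) (\<lambda>B. PP (real CARD('a)) N (CARD('k) - vec.dim (insert x S \<union> set B))))"
    apply (simp only: seq_pmf.simps)
    apply (subst E_bind[where B=1], rule PP_abs_q)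
    apply (subst E_bind[where B=1], rule PP_abs_q)
    by simp
  also have "\<dots> \<le> E p (\<lambda>x. PP (real CARD('a)) (N + length ps) (CARD('k) - vec.dim (insert x S)))"
    apply (rule E_mono[where B=1])
      apply (rule E_bound, rule PP_abs_q)
     apply (rule PP_abs_q)
    apply (rule Cons.IH) using Cons.prems by auto
  also have "\<dots> \<le> PP (real CARD('a)) (Suc (N + length ps)) (CARD('k) - vec.dim S)"
    using Cons.prems by (intro step_le) auto
  finally show ?case by simp
qed

lemma L_unif:
  fixes S :: "('a::{finite,field} ^ 'k) set"
  shows "E (replicate_pmf n (pmf_of_set UNIV)) (\<lambda>B. PP (real CARD('a)) N (CARD('k) - vec.dim (S \<union> set B)))
          = PP (real CARD('a)) (N + n) (CARD('k) - vec.dim S)"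
proof (induction n arbitrary: S)
  case 0
  then show ?case by simp
next
  case (Suc n)
  have "E (replicate_pmf (Suc n) (pmf_of_set UNIV)) (\<lambda>B. PP (real CARD('a)) N (CARD('k) - vec.dim (S \<union> set B)))
     = E (pmf_of_set UNIV) (\<lambda>x. E (replicate_pmf n (pmf_of_set UNIV)) (\<lambda>B. PP (real CARD('a)) N (CARD('k) - vec.dim (insert x S \<union> set B))))"
    apply (simp only: replicate_pmf.simps)
    apply (subst E_bind[where B=1], rule PP_abs_q)
    apply (subst E_bind[where B=1], rule PP_abs_q)
    by simp
  also have "\<dots> = E (pmf_of_set UNIV) (\<lambda>x. PP (real CARD('a)) (N + n) (CARD('k) - vec.dim (insert x S)))"
    by (simp only: Suc.IH)
  also have "\<dots> = PP (real CARD('a)) (Suc (N + n)) (CARD('k) - vec.dim S)"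
    by (rule step_eq)
  finally show ?case by simp
qed

lemma pmf_as_E: "pmf (map_pmf f p) x = E p (\<lambda>y. of_bool (f y = x))"
proof -
  have "pmf (map_pmf f p) x = measure_pmf.prob p (f -` {x})" by (rule pmf_map)
  also have "\<dots> = E p (\<lambda>y. of_bool (y \<in> f -` {x}))" by (rule E_of_bool_prob[symmetric])
  finally show ?thesis by simp
qed

lemma E_on_dims:
  fixes p :: "('a::{finite,field} ^ 'k) list pmf"
  shows "E p (\<lambda>A. h (vec.dim (set A))) = (\<Sum>d\<le>CARD('k). h d * pmf (map_pmf (\<lambda>A. vec.dim (set A)) p) d)"
proof -
  have "E p (\<lambda>A. h (vec.dim (set A))) = E (map_pmf (\<lambda>A. vec.dim (set A)) p) h" by simp
  also have "\<dots> = (\<Sum>d\<le>CARD('k). h d * pmf (map_pmf (\<lambda>A. vec.dim (set A)) p) d)"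
    by (rule integral_measure_pmf_real) (auto simp: dim_subset_UNIV_cart_gen)
  finally show ?thesis .
qed

lemma step_dim:
  fixes S :: "('a::{finite,field} ^ 'k) set"
  shows "E (pmf_of_set UNIV) (\<lambda>x. of_bool (vec.dim (insert x S) = r))
    = (if vec.dim S = r then real CARD('a) powi (int (vec.dim S) - int CARD('k)) else 0)
      + (if Suc (vec.dim S) = r then 1 - real CARD('a) powi (int (vec.dim S) - int CARD('k)) else 0)"
proof -
  have "E (pmf_of_set UNIV) (\<lambda>x. of_bool (vec.dim (insert x S) = r))
    = E (pmf_of_set UNIV) (\<lambda>x. of_bool (Suc (vec.dim S) = r) + of_bool (x \<in> vec.span S) *
          (of_bool (vec.dim S = r) - of_bool (Suc (vec.dim S) = r)))"
    by (rule arg_cong[where f="E _"]) (auto simp: vec.dim_insert)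
  also have "\<dots> = of_bool (Suc (vec.dim S) = r) + E (pmf_of_set UNIV) (\<lambda>x. of_bool (x \<in> vec.span S)) *
          (of_bool (vec.dim S = r) - of_bool (Suc (vec.dim S) = r))"
    by (rule E_affine[where B=1]) simp
  finally show ?thesis unfolding E_of_bool_prob prob_uniform_span by auto
qed

lemma if_0_mult: "(if P then a else 0) * b = (if P then a * b else (0::real))" by simp

lemma rank_dist:
  "pmf (map_pmf (\<lambda>A. vec.dim (set A)) (replicate_pmf a (pmf_of_set (UNIV :: ('a::{finite,field} ^ 'k) set)))) r
    = Pr (real CARD('a)) r a CARD('k)"
proof (induction a arbitrary: r)
  case 0
  then show ?case by (simp add: Pr_0_left indicator_def)
next
  case (Suc a)
  define q where "q = real CARD('a)"
  have q: "q > 1" unfolding q_def by (rule q_gt1)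
  define K where "K = CARD('k)"
  define U where "U = pmf_of_set (UNIV :: ('a ^ 'k) set)"
  have "pmf (map_pmf (\<lambda>A. vec.dim (set A)) (replicate_pmf (Suc a) U)) r
      = E (replicate_pmf (Suc a) U) (\<lambda>A. of_bool (vec.dim (set A) = r))"
    by (rule pmf_as_E)
  also have "\<dots> = E U (\<lambda>x. E (replicate_pmf a U) (\<lambda>A. of_bool (vec.dim (insert x (set A)) = r)))"
    apply (simp only: replicate_pmf.simps)
    apply (subst E_bind[where B=1], rule of_bool_abs)
    apply (subst E_bind[where B=1], rule of_bool_abs)
    by simp
  also have "\<dots> = E (replicate_pmf a U) (\<lambda>A. E U (\<lambda>x. of_bool (vec.dim (insert x (set A)) = r)))"
    by (rule E_swap[where B=1]) simp
  also have "\<dots> = E (replicate_pmf a U) (\<lambda>A. (\<lambda>d. (if d = r then q powi (int d - int K) else 0)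
      + (if Suc d = r then 1 - q powi (int d - int K) else 0)) (vec.dim (set A)))"
    unfolding U_def step_dim q_def K_def ..
  also have "\<dots> = (\<Sum>d\<le>K. ((if d = r then q powi (int d - int K) else 0)
      + (if Suc d = r then 1 - q powi (int d - int K) else 0)) * Pr q d a K)"
    apply (subst E_on_dims[where h="\<lambda>d. (if d = r then q powi (int d - int K) else 0)
      + (if Suc d = r then 1 - q powi (int d - int K) else 0)"])
    unfolding U_def Suc.IH q_def K_def ..
  also have "\<dots> = Pr q r (Suc a) K"
  proof (cases r)
    case 0
    then show ?thesis using Pr_rec0[of q a K] q
      by (simp add: if_0_mult sum.delta' power_int_minus)
  next
    case (Suc c)
    have e: "(\<Sum>d\<le>K. ((if d = r then q powi (int d - int K) else 0)
      + (if Suc d = r then 1 - q powi (int d - int K) else 0)) * Pr q d a K)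
      = (if r \<le> K then q powi (int r - int K) * Pr q r a K else 0)
        + (if c \<le> K then (1 - q powi (int c - int K)) * Pr q c a K else 0)"
      unfolding Suc by (simp add: distrib_right sum.distrib if_0_mult sum.delta')
    show ?thesis
    proof (cases "c < K")
      case True
      then show ?thesis unfolding e using Pr_rec[OF q True, of a] Suc by simp
    next
      case False
      then show ?thesis unfolding e using Pr_zero_b[of K r q] Pr_zero_b[of K "Suc r" q] Suc
        by (auto simp: Pr_zero_b)
    qed
  qed
  finally show ?case unfolding U_def q_def K_def .
qed

lemma E_rank:
  "E (replicate_pmf a (pmf_of_set (UNIV :: ('a::{finite,field} ^ 'k) set))) (\<lambda>A. h (vec.dim (set A)))
    = (\<Sum>d\<le>CARD('k). h d * Pr (real CARD('a)) d a CARD('k))"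
  unfolding E_on_dims rank_dist ..

abbreviation cnt :: "bool list \<Rightarrow> nat" where "cnt fl \<equiv> length (filter id fl)"

lemma received_Nil[simp]: "received [] fl = []"
  by (simp add: received_def)

lemma received_Cons[simp]: "received (x # xs) (f # fs) = (if f then x # received xs fs else received xs fs)"
proof -
  have u: "[0..<Suc n] = 0 # map Suc [0..<n]" for n
    by (simp only: upt_conv_Cons[OF zero_less_Suc] map_Suc_upt)
  show ?thesis unfolding received_def length_Cons u by (simp add: comp_def cong: if_cong)
qed

lemma set_received: "set (received xs fl) = {xs ! i | i. i < length xs \<and> fl ! i}"
  unfolding received_def by auto

lemma received_map: "received (map f xs) fl = map f (received xs fl)"
  unfolding received_def by (auto simp: map_concat intro!: arg_cong[where f=concat] map_cong)

lemma set_seq_pmf: "xs \<in> set_pmf (seq_pmf ps) \<Longrightarrow> list_all2 (\<lambda>x p. x \<in> set_pmf p) xs ps"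
  by (induction ps arbitrary: xs) auto

lemma split1:
  "map_pmf (\<lambda>xs. received xs fl) (replicate_pmf (length fl) p) = replicate_pmf (cnt fl) p"
proof (induction fl)
  case Nil
  then show ?case by simp
next
  case (Cons f fs)
  show ?case
  proof (cases f)
    case True
    have "map_pmf (\<lambda>xs. received xs (f # fs)) (replicate_pmf (length (f # fs)) p)
       = bind_pmf p (\<lambda>x. map_pmf (Cons x) (map_pmf (\<lambda>xs. received xs fs) (replicate_pmf (length fs) p)))"
      using True by (simp add: map_bind_pmf map_pmf_def bind_assoc_pmf bind_return_pmf)
    also have "\<dots> = replicate_pmf (cnt (f # fs)) p"
      unfolding Cons.IH using True by (simp add: map_pmf_def)
    finally show ?thesis .
  next
    case False
    have "map_pmf (\<lambda>xs. received xs (f # fs)) (replicate_pmf (length (f # fs)) p)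
       = bind_pmf p (\<lambda>x. map_pmf (\<lambda>xs. received xs fs) (replicate_pmf (length fs) p))"
      using False by (simp add: map_bind_pmf map_pmf_def bind_assoc_pmf bind_return_pmf)
    also have "\<dots> = replicate_pmf (cnt (f # fs)) p"
      unfolding Cons.IH using False by (simp add: bind_pmf_const)
    finally show ?thesis .
  qed
qed

lemma split2:
  assumes "length f1 = length f2" "\<forall>i<length f1. \<not> (f1 ! i \<and> f2 ! i)"
  shows "map_pmf (\<lambda>xs. (received xs f1, received xs f2)) (replicate_pmf (length f1) p)
          = pair_pmf (replicate_pmf (cnt f1) p) (replicate_pmf (cnt f2) p)"
  using assms
proof (induction f1 f2 rule: list_induct2)
  case Nil
  then show ?case by (simp add: pair_return_pmf1)
next
  case (Cons a f1 b f2)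
  have IH: "map_pmf (\<lambda>xs. (received xs f1, received xs f2)) (replicate_pmf (length f1) p)
          = pair_pmf (replicate_pmf (cnt f1) p) (replicate_pmf (cnt f2) p)"
    using Cons.prems by (intro Cons.IH) auto
  have ab: "\<not> (a \<and> b)" using Cons.prems by auto
  have "map_pmf (\<lambda>xs. (received xs (a # f1), received xs (b # f2))) (replicate_pmf (length (a # f1)) p)
     = bind_pmf p (\<lambda>x. map_pmf (\<lambda>(u, v). (if a then x # u else u, if b then x # v else v))
          (map_pmf (\<lambda>xs. (received xs f1, received xs f2)) (replicate_pmf (length f1) p)))"
    by (simp add: map_bind_pmf map_pmf_def bind_assoc_pmf bind_return_pmf)
  also have "\<dots> = bind_pmf p (\<lambda>x. map_pmf (\<lambda>(u, v). (if a then x # u else u, if b then x # v else v))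
          (pair_pmf (replicate_pmf (cnt f1) p) (replicate_pmf (cnt f2) p)))"
    unfolding IH ..
  also have "\<dots> = pair_pmf (replicate_pmf (cnt (a # f1)) p) (replicate_pmf (cnt (b # f2)) p)"
  proof (cases a)
    case True
    then have "\<not> b" using ab by simp
    then show ?thesis using True
      by (simp add: pair_pmf_def map_bind_pmf map_pmf_def bind_assoc_pmf bind_return_pmf)
  next
    case False
    show ?thesis
    proof (cases b)
      case True
      then show ?thesis using False
        apply (simp add: pair_pmf_def map_bind_pmf map_pmf_def bind_assoc_pmf bind_return_pmf)
        apply (subst bind_commute_pmf)
        apply (rule bind_pmf_cong, simp)
        apply simp
        done
    next
      case b: False
      then show ?thesis using False
        by (simp add: pair_pmf_def map_bind_pmf map_pmf_def bind_assoc_pmf bind_return_pmf bind_pmf_const)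
    qed
  qed
  finally show ?case .
qed

lemma seq_pmf_append: "seq_pmf (xs @ ys) = do {a \<leftarrow> seq_pmf xs; b \<leftarrow> seq_pmf ys; return_pmf (a @ b)}"
  by (induction xs) (simp_all add: bind_return_pmf bind_return_pmf' bind_assoc_pmf)

lemma dim_full_iff: "vec.dim (S :: ('a::field ^ 'k) set) = CARD('k) \<longleftrightarrow> vec.span S = UNIV"
  using vec.dim_eq_full[of S] vec_dim_card vec.dim_UNIV vec.dimension_def by metis

lemma map_replicate_pmf: "map_pmf (map f) (replicate_pmf n p) = replicate_pmf n (map_pmf f p)"
proof (induction n)
  case 0
  then show ?case by simp
next
  case (Suc n)
  have "replicate_pmf (Suc n) (map_pmf f p) = bind_pmf (map_pmf f p) (\<lambda>x.
      bind_pmf (map_pmf (map f) (replicate_pmf n p)) (\<lambda>xs. return_pmf (x # xs)))"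
    by (simp add: Suc.IH)
  also have "\<dots> = map_pmf (map f) (replicate_pmf (Suc n) p)"
    by (simp add: bind_map_pmf map_bind_pmf map_pmf_def bind_assoc_pmf bind_return_pmf)
  finally show ?case by simp
qed

lemma mat_mult_rows_lin: "mat_mult_rows G C = map (\<lambda>g. lin g C) G"
  by (simp add: mat_mult_rows_def lin_def)

definition LP :: "('a::{finite,field} ^ 'k) list \<Rightarrow> ('a ^ 'k) pmf" where
  "LP cs = map_pmf (\<lambda>g. lin g cs) (replicate_pmf (length cs) (pmf_of_set UNIV))"

lemma relay_E:
  fixes F :: "('a::{finite,field} ^ 'k) list \<Rightarrow> real"
  assumes F: "\<And>x. \<bar>F x\<bar> \<le> B"
  shows "E (relay_pmf NS NR eSR eRD C) F =
    E (replicate_pmf NS (bernoulli_pmf (1 - eSR))) (\<lambda>sr.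
      E (replicate_pmf NR (bernoulli_pmf (1 - eRD))) (\<lambda>rd.
        E (replicate_pmf (cnt rd) (LP (received C sr))) F))"
proof -
  define P where "P sr = replicate_pmf (length (received C sr)) (pmf_of_set (UNIV :: 'a set))" for sr
  have "E (relay_pmf NS NR eSR eRD C) F =
    E (replicate_pmf NS (bernoulli_pmf (1 - eSR))) (\<lambda>sr.
      E (replicate_pmf NR (P sr)) (\<lambda>G.
        E (replicate_pmf NR (bernoulli_pmf (1 - eRD))) (\<lambda>rd.
          F (received (mat_mult_rows G (received C sr)) rd))))"
    unfolding relay_pmf_def Let_def P_def
    apply (subst E_bind[where B=B], rule F)
    apply (subst E_bind[where B=B], rule F)
    apply (subst E_bind[where B=B], rule F)
    by simp
  also have "\<dots> = E (replicate_pmf NS (bernoulli_pmf (1 - eSR))) (\<lambda>sr.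
        E (replicate_pmf NR (bernoulli_pmf (1 - eRD))) (\<lambda>rd.
          E (replicate_pmf NR (P sr)) (\<lambda>G.
          F (received (mat_mult_rows G (received C sr)) rd))))"
    by (subst E_swap[where B=B]) (auto simp: F)
  also have "\<dots> = E (replicate_pmf NS (bernoulli_pmf (1 - eSR))) (\<lambda>sr.
      E (replicate_pmf NR (bernoulli_pmf (1 - eRD))) (\<lambda>rd.
        E (replicate_pmf (cnt rd) (LP (received C sr))) F))"
  proof (intro E_cong)
    fix sr rd
    assume "rd \<in> set_pmf (replicate_pmf NR (bernoulli_pmf (1 - eRD)))"
    then have l: "length rd = NR" by (simp add: set_replicate_pmf)
    have "E (replicate_pmf NR (P sr)) (\<lambda>G. F (received (mat_mult_rows G (received C sr)) rd))
       = E (map_pmf (\<lambda>G. received G rd) (replicate_pmf (length rd) (P sr)))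
           (\<lambda>G. F (map (\<lambda>g. lin g (received C sr)) G))"
      by (simp add: l mat_mult_rows_lin received_map)
    also have "\<dots> = E (map_pmf (map (\<lambda>g. lin g (received C sr))) (replicate_pmf (cnt rd) (P sr))) F"
      unfolding split1 by simp
    also have "\<dots> = E (replicate_pmf (cnt rd) (LP (received C sr))) F"
      unfolding map_replicate_pmf LP_def P_def ..
    finally show "E (replicate_pmf NR (P sr)) (\<lambda>G. F (received (mat_mult_rows G (received C sr)) rd))
       = E (replicate_pmf (cnt rd) (LP (received C sr))) F" .
  qed
  finally show ?thesis .
qed

definition pat :: "nat \<Rightarrow> nat \<Rightarrow> real \<Rightarrow> real \<Rightarrow> (bool list \<times> bool list) pmf" where
  "pat NS NR a b = pair_pmf (replicate_pmf NS (bernoulli_pmf (1 - a))) (replicate_pmf NR (bernoulli_pmf (1 - b)))"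

lemma PPb_abs: "\<bar>PP (real CARD('a::{finite,field})) n b * of_bool P\<bar> \<le> 1"
  using PP_abs_q[where 'a='a, of n b] by (cases P) auto

lemma PPb_abs': "\<bar>of_bool P * PP (real CARD('a::{finite,field})) n b\<bar> \<le> 1"
  using PP_abs_q[where 'a='a, of n b] by (cases P) auto

lemma PP_nonneg_q: "0 \<le> PP (real CARD('a::{finite,field})) n b"
  using q_gt1[where 'a='a] by (intro PP_nonneg) simp

lemma E_pat:
  assumes "\<And>x. \<bar>h x\<bar> \<le> B"
  shows "E (pat NS NR a b) h = E (replicate_pmf NS (bernoulli_pmf (1 - a))) (\<lambda>sr.
            E (replicate_pmf NR (bernoulli_pmf (1 - b))) (\<lambda>rd. h (sr, rd)))"
  unfolding pat_def pair_pmf_def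
  apply (subst E_bind[where B=B], rule assms)
  apply (subst E_bind[where B=B], rule assms)
  by simp

lemma claim:
  fixes C :: "('a::{finite,field} ^ 'k) list"
  shows "E (seq_pmf (map (\<lambda>j. relay_pmf NS NR (eSR j) (eRD j) C) js))
     (\<lambda>outs. PP (real CARD('a)) N (CARD('k) - vec.dim (S \<union> set (concat outs)))
         * of_bool (vec.span (T \<union> set (concat outs)) = UNIV))
   \<le> E (seq_pmf (map (\<lambda>j. pat NS NR (eSR j) (eRD j)) js))
     (\<lambda>ps. PP (real CARD('a)) (N + sum_list (map (\<lambda>p. cnt (snd p)) ps)) (CARD('k) - vec.dim S)
         * of_bool (vec.span (T \<union> (\<Union>p\<in>set ps. set (received C (fst p)))) = UNIV))"
proof (induction js arbitrary: S T N)
  case Nil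
  then show ?case by simp
next
  case (Cons j js)
  define q where "q = real CARD('a)"
  define K where "K = CARD('k)"
  define RL where "RL = seq_pmf (map (\<lambda>j. relay_pmf NS NR (eSR j) (eRD j) C) js)"
  define PS where "PS = seq_pmf (map (\<lambda>j. pat NS NR (eSR j) (eRD j)) js)"
  define SR where "SR = replicate_pmf NS (bernoulli_pmf (1 - eSR j))"
  define RD where "RD = replicate_pmf NR (bernoulli_pmf (1 - eRD j))"
  define m' where "m' ps = sum_list (map (\<lambda>p. cnt (snd p)) ps)" for ps :: "(bool list \<times> bool list) list"
  define R where "R ps = (\<Union>p\<in>set ps. set (received C (fst p)))" for ps :: "(bool list \<times> bool list) list"
  define g where "g S' T' ps = PP q (N + m' ps) (K - vec.dim S') * of_bool (vec.span (T' \<union> R ps) = UNIV)"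
    for S' T' :: "('a ^ 'k) set" and ps
  have gb: "\<bar>g S' T' ps\<bar> \<le> 1" for S' T' ps unfolding g_def q_def by (rule PPb_abs)
  have IH: "E RL (\<lambda>outs. PP q N (K - vec.dim (S' \<union> set (concat outs)))
         * of_bool (vec.span (T' \<union> set (concat outs)) = UNIV)) \<le> E PS (g S' T')" for S' T'
    unfolding RL_def PS_def g_def m'_def R_def q_def K_def by (rule Cons.IH)
  have "E (seq_pmf (map (\<lambda>j. relay_pmf NS NR (eSR j) (eRD j) C) (j # js)))
     (\<lambda>outs. PP q N (K - vec.dim (S \<union> set (concat outs)))
         * of_bool (vec.span (T \<union> set (concat outs)) = UNIV))
     = E (relay_pmf NS NR (eSR j) (eRD j) C) (\<lambda>ou. E RL (\<lambda>outs.
         PP q N (K - vec.dim ((S \<union> set ou) \<union> set (concat outs)))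
         * of_bool (vec.span ((T \<union> set ou) \<union> set (concat outs)) = UNIV)))"
    unfolding RL_def q_def
    apply (simp only: list.map seq_pmf.simps)
    apply (subst E_bind[where B=1], rule PPb_abs)
    apply (subst E_bind[where B=1], rule PPb_abs)
    by (simp add: Un_assoc)
  also have "\<dots> \<le> E (relay_pmf NS NR (eSR j) (eRD j) C) (\<lambda>ou. E PS (g (S \<union> set ou) (T \<union> set ou)))"
    apply (rule E_mono[where B=1])
      apply (rule E_bound, unfold q_def, rule PPb_abs)
     apply (rule E_bound, rule gb)
    apply (rule IH[unfolded q_def])
    done
  also have "\<dots> = E SR (\<lambda>sr. E RD (\<lambda>rd. E (replicate_pmf (cnt rd) (LP (received C sr)))
           (\<lambda>X. E PS (g (S \<union> set X) (T \<union> set X)))))"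
    unfolding SR_def RD_def by (rule relay_E[where B=1]) (rule E_bound, rule gb)
  also have "\<dots> \<le> E SR (\<lambda>sr. E RD (\<lambda>rd. E (replicate_pmf (cnt rd) (LP (received C sr)))
           (\<lambda>X. E PS (g (S \<union> set X) (T \<union> set (received C sr))))))"
  proof -
    have "E PS (g (S \<union> set X) (T \<union> set X)) \<le> E PS (g (S \<union> set X) (T \<union> set (received C sr)))"
      if X: "X \<in> set_pmf (replicate_pmf n (LP (received C sr)))" for X sr n
    proof (rule E_mono[where B=1])
      fix ps
      have sub: "set X \<subseteq> vec.span (set (received C sr))"
        using X lin_in_span by (fastforce simp: set_replicate_pmf LP_def)
      have "vec.span (T \<union> set X \<union> R ps) \<subseteq> vec.span (T \<union> set (received C sr) \<union> R ps)"
        using sub by (intro vec.span_minimal) (auto intro: vec.span_base vec.span_mono[THEN subsetD, rotated])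
      then have "vec.span (T \<union> set X \<union> R ps) = UNIV \<Longrightarrow> vec.span (T \<union> set (received C sr) \<union> R ps) = UNIV"
        by auto
      then show "g (S \<union> set X) (T \<union> set X) ps \<le> g (S \<union> set X) (T \<union> set (received C sr)) ps"
        unfolding g_def q_def using PP_nonneg_q[where 'a='a] by auto
    qed (rule gb)+
    note * = this
    show ?thesis
      apply (rule E_mono[where B=1], (rule E_bound)+, rule gb, (rule E_bound)+, rule gb)
      apply (rule E_mono[where B=1], (rule E_bound)+, rule gb, (rule E_bound)+, rule gb)
      apply (rule E_mono[where B=1], rule E_bound, rule gb, rule E_bound, rule gb)
      using * by blast
  qed
  also have "\<dots> = E SR (\<lambda>sr. E RD (\<lambda>rd. E PS (\<lambda>ps.
         of_bool (vec.span (T \<union> set (received C sr) \<union> R ps) = UNIV) *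
         E (replicate_pmf (cnt rd) (LP (received C sr))) (\<lambda>X. PP q (N + m' ps) (K - vec.dim (S \<union> set X))))))"
  proof -
    have "E (replicate_pmf (cnt rd) (LP (received C sr))) (\<lambda>X. E PS (g (S \<union> set X) (T \<union> set (received C sr))))
       = E PS (\<lambda>ps. E (replicate_pmf (cnt rd) (LP (received C sr))) (\<lambda>X. g (S \<union> set X) (T \<union> set (received C sr)) ps))"
      for sr rd by (rule E_swap[where B=1]) (rule gb)
    moreover have "E (replicate_pmf (cnt rd) (LP (received C sr))) (\<lambda>X. g (S \<union> set X) (T \<union> set (received C sr)) ps)
       = of_bool (vec.span (T \<union> set (received C sr) \<union> R ps) = UNIV) *
         E (replicate_pmf (cnt rd) (LP (received C sr))) (\<lambda>X. PP q (N + m' ps) (K - vec.dim (S \<union> set X)))"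
      for sr rd ps unfolding g_def by (simp add: mult.commute)
    ultimately show ?thesis by simp
  qed
  also have "\<dots> \<le> E SR (\<lambda>sr. E RD (\<lambda>rd. E PS (\<lambda>ps.
         of_bool (vec.span (T \<union> set (received C sr) \<union> R ps) = UNIV) *
         PP q (N + m' ps + cnt rd) (K - vec.dim S))))"
  proof -
    have L: "E (replicate_pmf (cnt rd) (LP (received C sr))) (\<lambda>X. PP q (N + m' ps) (K - vec.dim (S \<union> set X)))
         \<le> PP q (N + m' ps + cnt rd) (K - vec.dim S)" for sr rd ps
      unfolding replicate_pmf_seq q_def K_def
      using L_dom[where ps="replicate (cnt rd) (LP (received C sr))" and S=S and N="N + m' ps"]
      by (simp add: LP_def dom_lin)
    have b1: "\<bar>of_bool P * E M (\<lambda>X. PP q n (K - vec.dim (S \<union> set X)))\<bar> \<le> 1"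
      for P and M :: "('a ^ 'k) list pmf" and n
    proof -
      have "\<bar>E M (\<lambda>X. PP q n (K - vec.dim (S \<union> set X)))\<bar> \<le> 1"
        unfolding q_def by (rule E_bound, rule PP_abs_q)
      then show ?thesis by (cases P) auto
    qed
    have b2: "\<bar>of_bool P * PP q n b\<bar> \<le> 1" for P n b unfolding q_def by (rule PPb_abs')
    show ?thesis
      apply (rule E_mono[where B=1], (rule E_bound)+, rule b1, (rule E_bound)+, rule b2)
      apply (rule E_mono[where B=1], (rule E_bound)+, rule b1, (rule E_bound)+, rule b2)
      apply (rule E_mono[where B=1], rule b1, rule b2)
      using L by (simp add: mult_left_mono)
  qed
  also have "\<dots> = E (seq_pmf (map (\<lambda>j. pat NS NR (eSR j) (eRD j)) (j # js)))
     (\<lambda>ps. PP q (N + m' ps) (K - vec.dim S)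
         * of_bool (vec.span (T \<union> R ps) = UNIV))"
    unfolding PS_def
    apply (simp only: list.map seq_pmf.simps)
    apply (subst E_bind[where B=1], unfold q_def, rule PPb_abs)
    apply (subst E_pat[where B=1])
    subgoal by (rule E_bound, rule PPb_abs)
    unfolding SR_def RD_def
    apply (subst E_bind[where B=1], rule PPb_abs)
    by (simp add: m'_def R_def Un_assoc algebra_simps)
  finally show ?case unfolding q_def K_def m'_def R_def .
qed

definition Phi :: "real \<Rightarrow> nat \<Rightarrow> nat \<Rightarrow> nat \<Rightarrow> nat \<Rightarrow> real" where
  "Phi q K m' mD n = (\<Sum>d\<le>K. PP q m' (K - d) * PP q n (K - d) * Pr q d mD K)"

lemma Phi_E:
  "Phi (real CARD('a::{finite,field})) CARD('k) m' mD n
   = E (replicate_pmf mD (pmf_of_set (UNIV :: ('a ^ 'k) set)))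
       (\<lambda>A. PP (real CARD('a)) m' (CARD('k) - vec.dim (set A)) * PP (real CARD('a)) n (CARD('k) - vec.dim (set A)))"
  unfolding Phi_def
  by (subst E_rank[where h="\<lambda>d. PP (real CARD('a)) m' (CARD('k) - d) * PP (real CARD('a)) n (CARD('k) - d)"]) simp

lemma PP2_abs: "\<bar>PP (real CARD('a::{finite,field})) m b * PP (real CARD('a)) n c\<bar> \<le> 1"
  using PP_abs_q[where 'a='a, of m b] PP_abs_q[where 'a='a, of n c]
  by (simp add: abs_mult mult_le_one)

lemma Phi_abs: "\<bar>Phi (real CARD('a::{finite,field})) CARD('k::finite) m' mD n\<bar> \<le> 1"
  unfolding Phi_E[where 'a='a and 'k='k] by (rule E_bound, rule PP2_abs)

lemma E_C_step:
  fixes sd :: "bool list" and ps :: "(bool list \<times> bool list) list"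
  assumes l: "length sd = NS"
  defines "Rn \<equiv> map (\<lambda>i. \<not> sd ! i \<and> (\<exists>p\<in>set ps. fst p ! i)) [0..<NS]"
  shows "E (replicate_pmf NS (pmf_of_set (UNIV :: ('a::{finite,field} ^ 'k) set)))
      (\<lambda>C. PP (real CARD('a)) m' (CARD('k) - vec.dim (set (received C sd)))
         * of_bool (vec.span (set (received C sd) \<union> (\<Union>p\<in>set ps. set (received C (fst p)))) = UNIV))
    = Phi (real CARD('a)) CARD('k) m' (cnt sd) (cnt Rn)"
proof -
  define U where "U = pmf_of_set (UNIV :: ('a ^ 'k) set)"
  define F where "F A B = PP (real CARD('a)) m' (CARD('k) - vec.dim (set A))
         * of_bool (vec.span (set A \<union> set B) = UNIV)" for A B :: "('a ^ 'k) list"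
  have Fb: "\<bar>F A B\<bar> \<le> 1" for A B unfolding F_def by (rule PPb_abs)
  have lR: "length Rn = NS" unfolding Rn_def by simp
  have "E (replicate_pmf NS U)
      (\<lambda>C. PP (real CARD('a)) m' (CARD('k) - vec.dim (set (received C sd)))
         * of_bool (vec.span (set (received C sd) \<union> (\<Union>p\<in>set ps. set (received C (fst p)))) = UNIV))
     = E (replicate_pmf NS U) (\<lambda>C. F (received C sd) (received C Rn))"
  proof (rule E_cong)
    fix C assume "C \<in> set_pmf (replicate_pmf NS U)"
    then have lC: "length C = NS" by (simp add: set_replicate_pmf)
    have "set (received C sd) \<union> (\<Union>p\<in>set ps. set (received C (fst p)))
        = set (received C sd) \<union> set (received C Rn)"
    proof (intro set_eqI iffI)
      fix x assume "x \<in> set (received C sd) \<union> (\<Union>p\<in>set ps. set (received C (fst p)))"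
      then show "x \<in> set (received C sd) \<union> set (received C Rn)"
      proof
        assume "x \<in> set (received C sd)" then show ?thesis by simp
      next
        assume "x \<in> (\<Union>p\<in>set ps. set (received C (fst p)))"
        then obtain p i where p: "p \<in> set ps" "i < length C" "fst p ! i" "x = C ! i"
          unfolding set_received by auto
        show ?thesis
        proof (cases "sd ! i")
          case True then show ?thesis using p unfolding set_received by auto
        next
          case False
          then have "Rn ! i" using p lC unfolding Rn_def by auto
          then show ?thesis using p unfolding set_received by auto
        qed
      qed
    next
      fix x assume "x \<in> set (received C sd) \<union> set (received C Rn)"
      then show "x \<in> set (received C sd) \<union> (\<Union>p\<in>set ps. set (received C (fst p)))"
        unfolding set_received Rn_def using lC by auto
    qed
    then show "PP (real CARD('a)) m' (CARD('k) - vec.dim (set (received C sd)))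
         * of_bool (vec.span (set (received C sd) \<union> (\<Union>p\<in>set ps. set (received C (fst p)))) = UNIV)
       = F (received C sd) (received C Rn)" unfolding F_def by simp
  qed
  also have "\<dots> = E (map_pmf (\<lambda>C. (received C sd, received C Rn)) (replicate_pmf (length sd) U)) (case_prod F)"
    using l by simp
  also have "\<dots> = E (pair_pmf (replicate_pmf (cnt sd) U) (replicate_pmf (cnt Rn) U)) (case_prod F)"
    by (subst split2) (auto simp: l lR Rn_def)
  also have "\<dots> = E (replicate_pmf (cnt sd) U) (\<lambda>A. E (replicate_pmf (cnt Rn) U) (\<lambda>B. F A B))"
    unfolding pair_pmf_def
    apply (subst E_bind[where B=1], simp add: Fb split: prod.splits)
    apply (subst E_bind[where B=1], simp add: Fb split: prod.splits)
    by simp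
  also have "\<dots> = E (replicate_pmf (cnt sd) U) (\<lambda>A. PP (real CARD('a)) m' (CARD('k) - vec.dim (set A)) *
         PP (real CARD('a)) (cnt Rn) (CARD('k) - vec.dim (set A)))"
  proof (rule E_cong)
    fix A :: "('a ^ 'k) list"
    have e: "of_bool (vec.span (set A \<union> set B) = UNIV) = PP (real CARD('a)) 0 (CARD('k) - vec.dim (set A \<union> set B))" for B
    proof -
      have "vec.dim (set A \<union> set B) \<le> CARD('k)" by (rule dim_subset_UNIV_cart_gen)
      then show ?thesis using q_gt1[where 'a='a] dim_full_iff[of "set A \<union> set B"]
        by (auto simp: PP_0_left)
    qed
    have "E (replicate_pmf (cnt Rn) U) (\<lambda>B. F A B) = PP (real CARD('a)) m' (CARD('k) - vec.dim (set A)) *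
        E (replicate_pmf (cnt Rn) U) (\<lambda>B. PP (real CARD('a)) 0 (CARD('k) - vec.dim (set A \<union> set B)))"
      unfolding F_def e by simp
    also have "\<dots> = PP (real CARD('a)) m' (CARD('k) - vec.dim (set A)) *
         PP (real CARD('a)) (cnt Rn) (CARD('k) - vec.dim (set A))"
      unfolding U_def L_unif by simp
    finally show "E (replicate_pmf (cnt Rn) U) (\<lambda>B. F A B) = PP (real CARD('a)) m' (CARD('k) - vec.dim (set A)) *
         PP (real CARD('a)) (cnt Rn) (CARD('k) - vec.dim (set A))" .
  qed
  also have "\<dots> = Phi (real CARD('a)) CARD('k) m' (cnt sd) (cnt Rn)"
    unfolding Phi_E U_def ..
  finally show ?thesis unfolding U_def .
qed

definition RnF :: "nat \<Rightarrow> bool list \<Rightarrow> (bool list \<times> bool list) list \<Rightarrow> bool list" where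
  "RnF NS sd ps = map (\<lambda>i. \<not> sd ! i \<and> (\<exists>p\<in>set ps. fst p ! i)) [0..<NS]"

lemma success_le:
  fixes T :: "('a::{finite,field} ^ 'k) itself"
  shows "success_prob L NS NR eSD eSR eRD T \<le>
    E (replicate_pmf NS (bernoulli_pmf (1 - eSD))) (\<lambda>sd.
      E (seq_pmf (map (\<lambda>j. pat NS NR (eSR j) (eRD j)) [0..<L])) (\<lambda>ps.
        Phi (real CARD('a)) CARD('k) (sum_list (map (\<lambda>p. cnt (snd p)) ps)) (cnt sd) (cnt (RnF NS sd ps))))"
proof -
  define q where "q = real CARD('a)"
  define K where "K = CARD('k)"
  define U where "U = pmf_of_set (UNIV :: ('a ^ 'k) set)"
  define SD where "SD = replicate_pmf NS (bernoulli_pmf (1 - eSD))"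
  define PS where "PS = seq_pmf (map (\<lambda>j. pat NS NR (eSR j) (eRD j)) [0..<L])"
  define OU where "OU C = seq_pmf (map (\<lambda>j. relay_pmf NS NR (eSR j) (eRD j) C) [0..<L])" for C :: "('a ^ 'k) list"
  define m' where "m' ps = sum_list (map (\<lambda>p. cnt (snd p)) ps)" for ps :: "(bool list \<times> bool list) list"
  define f where "f C sd ps = PP q (m' ps) (K - vec.dim (set (received C sd)))
         * of_bool (vec.span (set (received C sd) \<union> (\<Union>p\<in>set ps. set (received C (fst p)))) = UNIV)"
    for C :: "('a ^ 'k) list" and sd ps
  have fb: "\<bar>f C sd ps\<bar> \<le> 1" for C sd ps unfolding f_def q_def by (rule PPb_abs)
  have "success_prob L NS NR eSD eSR eRD T =
     E (replicate_pmf NS U) (\<lambda>C. E SD (\<lambda>sd. E (OU C) (\<lambda>outs.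
        of_bool (vec.dim (set (received C sd) \<union> set (concat outs)) = K))))"
    unfolding success_prob_def network_pmf_def U_def SD_def OU_def K_def
    by (simp add: pmf_bind Let_def row_list_rank_def indicator_def)
  also have "\<dots> = E (replicate_pmf NS U) (\<lambda>C. E SD (\<lambda>sd. E (OU C) (\<lambda>outs.
        PP q 0 (K - vec.dim (set (received C sd) \<union> set (concat outs)))
        * of_bool (vec.span (set (received C sd) \<union> set (concat outs)) = UNIV))))"
  proof -
    have "of_bool (vec.dim S = K) = PP q 0 (K - vec.dim S) * of_bool (vec.span S = UNIV)"
      for S :: "('a ^ 'k) set"
    proof -
      have "vec.dim S \<le> K" unfolding K_def by (rule dim_subset_UNIV_cart_gen)
      then show ?thesis using q_gt1[where 'a='a] dim_full_iff[of S]
        by (auto simp: PP_0_left q_def K_def)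
    qed
    then show ?thesis by simp
  qed
  also have "\<dots> \<le> E (replicate_pmf NS U) (\<lambda>C. E SD (\<lambda>sd. E PS (\<lambda>ps. f C sd ps)))"
  proof -
    have b: "\<bar>PP q 0 (K - vec.dim (set (received C sd) \<union> set (concat outs)))
        * of_bool (vec.span (set (received C sd) \<union> set (concat outs)) = UNIV)\<bar> \<le> 1" for C sd outs
      unfolding q_def by (rule PPb_abs)
    have c: "E (OU C) (\<lambda>outs. PP q 0 (K - vec.dim (set (received C sd) \<union> set (concat outs)))
        * of_bool (vec.span (set (received C sd) \<union> set (concat outs)) = UNIV)) \<le> E PS (\<lambda>ps. f C sd ps)"
      for C sd
      unfolding OU_def PS_def f_def q_def K_def m'_def
      using claim[where N=0 and S="set (received C sd)" and T="set (received C sd)" and js="[0..<L]"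
          and C=C and NS=NS and NR=NR and eSR=eSR and eRD=eRD] by simp
    show ?thesis
      apply (rule E_mono[where B=1], (rule E_bound)+, rule b, (rule E_bound)+, rule fb)
      apply (rule E_mono[where B=1], (rule E_bound)+, rule b, (rule E_bound)+, rule fb)
      by (rule c)
  qed
  also have "\<dots> = E SD (\<lambda>sd. E PS (\<lambda>ps. E (replicate_pmf NS U) (\<lambda>C. f C sd ps)))"
    apply (subst E_swap[where B=1], rule E_bound, rule fb)
    apply (rule E_cong)
    apply (subst E_swap[where B=1], rule fb) ..
  also have "\<dots> = E SD (\<lambda>sd. E PS (\<lambda>ps.
        Phi q K (m' ps) (cnt sd) (cnt (RnF NS sd ps))))"
  proof (rule E_cong)+
    fix sd ps assume "sd \<in> set_pmf SD"
    then have l: "length sd = NS" unfolding SD_def by (simp add: set_replicate_pmf)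
    show "E (replicate_pmf NS U) (\<lambda>C. f C sd ps) = Phi q K (m' ps) (cnt sd) (cnt (RnF NS sd ps))"
      unfolding f_def U_def q_def K_def RnF_def by (rule E_C_step[OF l])
  qed
  finally show ?thesis unfolding SD_def PS_def q_def K_def m'_def .
qed

lemma E_rep_Suc:
  assumes "\<And>x. \<bar>F x\<bar> \<le> B"
  shows "E (replicate_pmf (Suc n) p) F = E p (\<lambda>a. E (replicate_pmf n p) (\<lambda>as. F (a # as)))"
  apply (simp only: replicate_pmf.simps)
  apply (subst E_bind[where B=B], rule assms)
  apply (subst E_bind[where B=B], rule assms)
  by simp

lemma E_seq_Cons:
  assumes "\<And>x. \<bar>F x\<bar> \<le> B"
  shows "E (seq_pmf (p # ps)) F = E p (\<lambda>a. E (seq_pmf ps) (\<lambda>as. F (a # as)))"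
  apply (simp only: seq_pmf.simps)
  apply (subst E_bind[where B=B], rule assms)
  apply (subst E_bind[where B=B], rule assms)
  by simp

lemma E_bern: "0 \<le> p \<Longrightarrow> p \<le> 1 \<Longrightarrow> E (bernoulli_pmf p) g = p * g True + (1 - p) * g False"
  by (subst integral_measure_pmf_real[where A=UNIV]) (auto simp: UNIV_bool)

lemma E_or_bern:
  assumes "0 \<le> x" "x \<le> 1" "0 \<le> y" "y \<le> 1"
  shows "E (bernoulli_pmf x) (\<lambda>a. E (bernoulli_pmf y) (\<lambda>b. h (a \<or> b)))
       = E (bernoulli_pmf (1 - (1 - x) * (1 - y))) h"
proof -
  have a: "0 \<le> (1 - x) * (1 - y)" using assms by simp
  have b: "(1 - x) * (1 - y) \<le> 1" using assms by (intro mult_le_one) auto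
  have "0 \<le> 1 - (1 - x) * (1 - y)" "1 - (1 - x) * (1 - y) \<le> 1"
    using a b by linarith+
  then show ?thesis using assms by (simp add: E_bern algebra_simps)
qed

definition OR2 :: "bool list \<Rightarrow> bool list \<Rightarrow> bool list" where
  "OR2 a b = map (\<lambda>(u, v). u \<or> v) (zip a b)"

lemma OR2_Cons[simp]: "OR2 (a # as) (b # bs) = (a \<or> b) # OR2 as bs"
  by (simp add: OR2_def)

lemma OR2_Nil[simp]: "OR2 [] [] = []"
  by (simp add: OR2_def)

lemma E_or_rep:
  assumes "0 \<le> x" "x \<le> 1" "0 \<le> y" "y \<le> 1" "\<And>c. \<bar>G c\<bar> \<le> B"
  shows "E (replicate_pmf n (bernoulli_pmf x)) (\<lambda>a. E (replicate_pmf n (bernoulli_pmf y)) (\<lambda>b. G (OR2 a b)))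
       = E (replicate_pmf n (bernoulli_pmf (1 - (1 - x) * (1 - y)))) G"
  using assms(5)
proof (induction n arbitrary: G)
  case 0
  then show ?case by simp
next
  case (Suc n)
  have B: "\<And>c. \<bar>G c\<bar> \<le> B" by (rule Suc.prems)
  have "E (replicate_pmf (Suc n) (bernoulli_pmf x)) (\<lambda>a. E (replicate_pmf (Suc n) (bernoulli_pmf y)) (\<lambda>b. G (OR2 a b)))
      = E (bernoulli_pmf x) (\<lambda>a0. E (replicate_pmf n (bernoulli_pmf x)) (\<lambda>as.
          E (bernoulli_pmf y) (\<lambda>b0. E (replicate_pmf n (bernoulli_pmf y)) (\<lambda>bs. G ((a0 \<or> b0) # OR2 as bs)))))"
    by (simp del: replicate_pmf.simps add: E_rep_Suc[where B=B] B E_bound)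
  also have "\<dots> = E (bernoulli_pmf x) (\<lambda>a0. E (bernoulli_pmf y) (\<lambda>b0.
          E (replicate_pmf n (bernoulli_pmf x)) (\<lambda>as. E (replicate_pmf n (bernoulli_pmf y)) (\<lambda>bs. G ((a0 \<or> b0) # OR2 as bs)))))"
    by (subst E_swap[where B=B]) (auto intro!: E_bound B)
  also have "\<dots> = E (bernoulli_pmf x) (\<lambda>a0. E (bernoulli_pmf y) (\<lambda>b0.
          E (replicate_pmf n (bernoulli_pmf (1 - (1 - x) * (1 - y)))) (\<lambda>cs. G ((a0 \<or> b0) # cs))))"
    by (subst Suc.IH) (auto intro!: B)
  also have "\<dots> = E (bernoulli_pmf (1 - (1 - x) * (1 - y))) (\<lambda>c0.
          E (replicate_pmf n (bernoulli_pmf (1 - (1 - x) * (1 - y)))) (\<lambda>cs. G (c0 # cs)))"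
    by (rule E_or_bern[OF assms(1-4), where h="\<lambda>c0. E (replicate_pmf n (bernoulli_pmf (1 - (1 - x) * (1 - y)))) (\<lambda>cs. G (c0 # cs))"])
  also have "\<dots> = E (replicate_pmf (Suc n) (bernoulli_pmf (1 - (1 - x) * (1 - y)))) G"
    by (simp del: replicate_pmf.simps add: E_rep_Suc[where B=B] B)
  finally show ?case .
qed

definition ORF :: "nat \<Rightarrow> (bool list \<times> bool list) list \<Rightarrow> bool list" where
  "ORF NS ps = map (\<lambda>i. \<exists>p\<in>set ps. fst p ! i) [0..<NS]"

lemma bern0: "bernoulli_pmf 0 = return_pmf False"
  by (rule pmf_eqI) (auto simp: indicator_def)

lemma rep_return: "replicate_pmf n (return_pmf x) = return_pmf (replicate n x)"
  by (induction n) (auto simp: bind_return_pmf)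

lemma ORF_Nil: "ORF NS [] = replicate NS False"
  by (simp add: ORF_def map_replicate_const)

lemma ORF_Cons: "length (fst p) = NS \<Longrightarrow> length R = NS \<Longrightarrow> ORF NS ps = R \<Longrightarrow> ORF NS (p # ps) = OR2 (fst p) R"
  unfolding ORF_def OR2_def by (auto simp: list_eq_iff_nth_eq)

lemma length_ORF[simp]: "length (ORF NS ps) = NS" by (simp add: ORF_def)

lemma pat_dist:
  assumes "\<forall>j\<in>set js. 0 \<le> eSR j \<and> eSR j \<le> 1" "\<And>R m. \<bar>H R m\<bar> \<le> 1"
  shows "E (seq_pmf (map (\<lambda>j. pat NS NR (eSR j) (eRD j)) js))
           (\<lambda>ps. H (ORF NS ps) (sum_list (map (\<lambda>p. cnt (snd p)) ps)))
       = E (replicate_pmf NS (bernoulli_pmf (1 - prod_list (map eSR js))))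
           (\<lambda>R. E (seq_pmf (map (\<lambda>j. replicate_pmf NR (bernoulli_pmf (1 - eRD j))) js))
             (\<lambda>rds. H R (sum_list (map cnt rds))))"
  using assms
proof (induction js arbitrary: H)
  case Nil
  then show ?case by (simp add: ORF_Nil bern0 rep_return)
next
  case (Cons j js)
  have B: "\<And>R m. \<bar>H R m\<bar> \<le> 1" by (rule Cons.prems(2))
  define SR where "SR = replicate_pmf NS (bernoulli_pmf (1 - eSR j))"
  define RD where "RD = replicate_pmf NR (bernoulli_pmf (1 - eRD j))"
  define PS where "PS = seq_pmf (map (\<lambda>j. pat NS NR (eSR j) (eRD j)) js)"
  define RDS where "RDS = seq_pmf (map (\<lambda>j. replicate_pmf NR (bernoulli_pmf (1 - eRD j))) js)"
  define e' where "e' = prod_list (map eSR js)"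
  have e'b: "0 \<le> e'" "e' \<le> 1" unfolding e'_def using Cons.prems(1)
    by (induction js) (auto intro: mult_le_one)
  have ej: "0 \<le> eSR j" "eSR j \<le> 1" using Cons.prems(1) by auto
  have "E (seq_pmf (map (\<lambda>j. pat NS NR (eSR j) (eRD j)) (j # js)))
           (\<lambda>ps. H (ORF NS ps) (sum_list (map (\<lambda>p. cnt (snd p)) ps)))
     = E SR (\<lambda>sr. E RD (\<lambda>rd. E PS (\<lambda>ps. H (ORF NS ((sr, rd) # ps)) (cnt rd + sum_list (map (\<lambda>p. cnt (snd p)) ps)))))"
    unfolding SR_def RD_def PS_def
    by (simp del: seq_pmf.simps add: E_seq_Cons[where B=1] E_pat[where B=1] B E_bound)
  also have "\<dots> = E SR (\<lambda>sr. E RD (\<lambda>rd. E PS (\<lambda>ps. H (OR2 sr (ORF NS ps)) (cnt rd + sum_list (map (\<lambda>p. cnt (snd p)) ps)))))"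
  proof (rule E_cong)+
    fix sr rd ps assume "sr \<in> set_pmf SR"
    then have "length sr = NS" unfolding SR_def by (simp add: set_replicate_pmf)
    then show "H (ORF NS ((sr, rd) # ps)) (cnt rd + sum_list (map (\<lambda>p. cnt (snd p)) ps))
        = H (OR2 sr (ORF NS ps)) (cnt rd + sum_list (map (\<lambda>p. cnt (snd p)) ps))"
      by (subst ORF_Cons[where R="ORF NS ps"]) auto
  qed
  also have "\<dots> = E SR (\<lambda>sr. E RD (\<lambda>rd. E (replicate_pmf NS (bernoulli_pmf (1 - e'))) (\<lambda>R.
       E RDS (\<lambda>rds. H (OR2 sr R) (cnt rd + sum_list (map cnt rds))))))"
    unfolding PS_def RDS_def e'_def
    by (subst Cons.IH) (use Cons.prems B in auto)
  also have "\<dots> = E SR (\<lambda>sr. E (replicate_pmf NS (bernoulli_pmf (1 - e'))) (\<lambda>R.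
       E RD (\<lambda>rd. E RDS (\<lambda>rds. H (OR2 sr R) (cnt rd + sum_list (map cnt rds))))))"
    by (subst E_swap[where B=1]) (auto intro!: E_bound B)
  also have "\<dots> = E (replicate_pmf NS (bernoulli_pmf (1 - (1 - (1 - eSR j)) * (1 - (1 - e'))))) (\<lambda>R.
       E RD (\<lambda>rd. E RDS (\<lambda>rds. H R (cnt rd + sum_list (map cnt rds)))))"
    unfolding SR_def
    by (rule E_or_rep[where B=1]) (use ej e'b in \<open>auto intro!: E_bound B\<close>)
  also have "\<dots> = E (replicate_pmf NS (bernoulli_pmf (1 - prod_list (map eSR (j # js)))))
           (\<lambda>R. E (seq_pmf (map (\<lambda>j. replicate_pmf NR (bernoulli_pmf (1 - eRD j))) (j # js)))
             (\<lambda>rds. H R (sum_list (map cnt rds))))"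
    unfolding RD_def RDS_def e'_def
    by (simp del: seq_pmf.simps add: E_seq_Cons[where B=1] B E_bound)
  finally show ?case .
qed

lemma E_cnt_bern:
  assumes "0 \<le> e" "e \<le> 1"
  shows "E (replicate_pmf NR (bernoulli_pmf (1 - e))) (\<lambda>rd. g (cnt rd)) = (\<Sum>k\<le>NR. Bin k NR e * g k)"
proof -
  have p: "1 - e \<in> {0..1}" using assms by auto
  have "E (replicate_pmf NR (bernoulli_pmf (1 - e))) (\<lambda>rd. g (cnt rd))
      = E (map_pmf (length \<circ> filter id) (replicate_pmf NR (bernoulli_pmf (1 - e)))) g" by simp
  also have "\<dots> = E (binomial_pmf NR (1 - e)) g" unfolding binomial_pmf_altdef[OF p] ..
  also have "\<dots> = (\<Sum>k\<le>NR. g k * pmf (binomial_pmf NR (1 - e)) k)"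
    by (rule integral_measure_pmf_real) (use p in \<open>auto simp: set_pmf_binomial_eq split: if_splits\<close>)
  also have "\<dots> = (\<Sum>k\<le>NR. Bin k NR e * g k)"
    using p by (simp add: Bin_def mult.commute)
  finally show ?thesis .
qed

lemma sum_PiE_Suc:
  "(\<Sum>mp\<in>PiE {..<Suc L} (\<lambda>_. A). F mp) = (\<Sum>mp\<in>PiE {..<L} (\<lambda>_. A). \<Sum>y\<in>A. F (mp(L := y)))"
  if "finite A"
proof -
  have eq: "PiE {..<Suc L} (\<lambda>_. A) = (\<lambda>(y, g). g(L := y)) ` (A \<times> PiE {..<L} (\<lambda>_. A))"
    unfolding lessThan_Suc by (rule PiE_insert_eq)
  have inj: "inj_on (\<lambda>(y, g). g(L := y)) (A \<times> PiE {..<L} (\<lambda>_. A))"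
    by (rule inj_combinator) simp
  have "(\<Sum>mp\<in>PiE {..<Suc L} (\<lambda>_. A). F mp) = (\<Sum>(y, g)\<in>A \<times> PiE {..<L} (\<lambda>_. A). F (g(L := y)))"
    unfolding eq sum.reindex[OF inj] by (simp add: comp_def case_prod_unfold)
  also have "\<dots> = (\<Sum>y\<in>A. \<Sum>g\<in>PiE {..<L} (\<lambda>_. A). F (g(L := y)))"
    by (rule sum.cartesian_product[symmetric])
  also have "\<dots> = (\<Sum>mp\<in>PiE {..<L} (\<lambda>_. A). \<Sum>y\<in>A. F (mp(L := y)))"
    by (rule sum.swap)
  finally show ?thesis .
qed

lemma rd_dist:
  assumes "\<forall>j<L. 0 \<le> eRD j \<and> eRD j \<le> 1" "\<And>s. \<bar>G s\<bar> \<le> 1"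
  shows "E (seq_pmf (map (\<lambda>j. replicate_pmf NR (bernoulli_pmf (1 - eRD j))) [0..<L]))
           (\<lambda>rds. G (sum_list (map cnt rds)))
       = (\<Sum>mp\<in>PiE {..<L} (\<lambda>_. {..NR}). (\<Prod>j<L. Bin (mp j) NR (eRD j)) * G (\<Sum>j<L. mp j))"
  using assms
proof (induction L arbitrary: G)
  case 0
  then show ?case by simp
next
  case (Suc L)
  have B: "\<And>s. \<bar>G s\<bar> \<le> 1" by (rule Suc.prems(2))
  define G' where "G' s = E (replicate_pmf NR (bernoulli_pmf (1 - eRD L))) (\<lambda>rd. G (s + cnt rd))" for s
  have G'b: "\<bar>G' s\<bar> \<le> 1" for s unfolding G'_def by (rule E_bound, rule B)
  have eL: "0 \<le> eRD L" "eRD L \<le> 1" using Suc.prems(1) by auto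
  have G'e: "G' s = (\<Sum>k\<le>NR. Bin k NR (eRD L) * G (s + k))" for s
    unfolding G'_def by (rule E_cnt_bern[OF eL])
  have "E (seq_pmf (map (\<lambda>j. replicate_pmf NR (bernoulli_pmf (1 - eRD j))) [0..<Suc L]))
           (\<lambda>rds. G (sum_list (map cnt rds)))
      = E (seq_pmf (map (\<lambda>j. replicate_pmf NR (bernoulli_pmf (1 - eRD j))) [0..<L]))
           (\<lambda>rds. G' (sum_list (map cnt rds)))"
    unfolding G'_def
    apply (simp only: upt_Suc_append[OF le0] map_append list.map seq_pmf_append)
    apply (subst E_bind[where B=1], rule B)
    apply (subst E_bind[where B=1], rule B)
    apply (simp del: seq_pmf.simps add: E_seq_Cons[where B=1] B)
    apply (simp add: add.commute)
    done
  also have "\<dots> = (\<Sum>mp\<in>PiE {..<L} (\<lambda>_. {..NR}). (\<Prod>j<L. Bin (mp j) NR (eRD j)) * G' (\<Sum>j<L. mp j))"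
    by (rule Suc.IH) (use Suc.prems G'b in auto)
  also have "\<dots> = (\<Sum>mp\<in>PiE {..<Suc L} (\<lambda>_. {..NR}). (\<Prod>j<Suc L. Bin (mp j) NR (eRD j)) * G (\<Sum>j<Suc L. mp j))"
  proof -
    have "(\<Prod>j<L. Bin ((mp(L := y)) j) NR (eRD j)) = (\<Prod>j<L. Bin (mp j) NR (eRD j))" for mp y
      by (rule prod.cong) auto
    moreover have "(\<Sum>j<L. (mp(L := y)) j) = (\<Sum>j<L. mp j)" for mp y
      by (rule sum.cong) auto
    ultimately show ?thesis
      unfolding sum_PiE_Suc[OF finite_atMost] G'e
      by (simp add: sum_distrib_left algebra_simps)
  qed
  finally show ?case .
qed

lemma Phi_P2:
  assumes q: "q \<noteq> 0"
  shows "Phi q K m' mD n = P2 q (m' + mD) (n + mD) mD K"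
proof -
  define I where "I = {i::nat. int K - int (m' + mD) + int mD \<le> int i
                                   \<and> int K - int (n + mD) + int mD \<le> int i \<and> i \<le> min mD K}"
  have "P2 q (m' + mD) (n + mD) mD K = (\<Sum>i\<in>I. Pr q i mD K * PP q m' (K - i) * PP q n (K - i))"
    unfolding P2_def I_def by simp
  also have "\<dots> = (\<Sum>d\<le>K. PP q m' (K - d) * PP q n (K - d) * Pr q d mD K)"
  proof (rule sum.mono_neutral_cong_left)
    show "I \<subseteq> {..K}" unfolding I_def by auto
    show "\<forall>i\<in>{..K} - I. PP q m' (K - i) * PP q n (K - i) * Pr q i mD K = 0"
    proof
      fix i assume i: "i \<in> {..K} - I"
      then have "mD < i \<or> m' < K - i \<or> n < K - i" unfolding I_def by auto
      then show "PP q m' (K - i) * PP q n (K - i) * Pr q i mD K = 0"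
        using q by (auto simp: PP_zero Pr_zero_a)
    qed
  qed (auto simp: mult_ac)
  finally show ?thesis unfolding Phi_def ..
qed

lemma P2_zero:
  assumes "m1 < K" "m12 \<le> m1"
  shows "P2 q m1 m2 m12 K = 0"
proof -
  have "{i::nat. int K - int m1 + int m12 \<le> int i \<and> int K - int m2 + int m12 \<le> int i \<and> i \<le> min m12 K} = {}"
    using assms by auto
  note e = this
  show ?thesis unfolding P2_def e by (rule sum.empty)
qed

lemma prod_list_upt: "prod_list (map f [0..<L]) = (\<Prod>j<L. f j)"
  by (induction L) auto

definition RnG :: "nat \<Rightarrow> bool list \<Rightarrow> bool list \<Rightarrow> bool list" where
  "RnG NS sd R = map (\<lambda>i. \<not> sd ! i \<and> R ! i) [0..<NS]"

lemma RnF_RnG: "RnF NS sd ps = RnG NS sd (ORF NS ps)"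
  unfolding RnF_def RnG_def ORF_def by (rule map_cong) auto

lemma map_idx_zip: "length a = length b \<Longrightarrow> map (\<lambda>i. f (a ! i) (b ! i)) [0..<length a] = map (\<lambda>(x, y). f x y) (zip a b)"
  by (rule nth_equalityI) auto

lemma cnt_split:
  assumes "length sd = length R"
  shows "cnt sd = cnt (received sd R) + cnt (received sd (map Not R))"
  using assms by (induction sd R rule: list_induct2) auto

lemma cnt_RnG:
  assumes "length sd = length R"
  shows "cnt (RnG (length sd) sd R) + cnt (received sd R) = cnt R"
proof -
  have "cnt (map (\<lambda>(x, y). \<not> x \<and> y) (zip sd R)) + cnt (received sd R) = cnt R"
    using assms by (induction sd R rule: list_induct2) auto
  then show ?thesis unfolding RnG_def map_idx_zip[OF assms, of "\<lambda>x y. \<not> x \<and> y"] .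
qed

lemma cnt_not': "length (filter Not R) = length R - cnt R"
  by (induction R) (auto simp: Suc_diff_le)

lemma cnt_not: "cnt (map Not R) = length R - cnt R"
  by (simp add: filter_map comp_def cnt_not')

lemma E_sd_split:
  assumes e: "0 \<le> eSD" "eSD \<le> 1" and lR: "length R = NS" and F: "\<And>a b. \<bar>F a b\<bar> \<le> 1"
  shows "E (replicate_pmf NS (bernoulli_pmf (1 - eSD))) (\<lambda>sd. F (cnt sd) (cnt (RnG NS sd R)))
    = (\<Sum>k1\<le>cnt R. \<Sum>k2\<le>NS - cnt R. Bin k1 (cnt R) eSD * Bin k2 (NS - cnt R) eSD * F (k1 + k2) (cnt R - k1))"
proof -
  define p where "p = bernoulli_pmf (1 - eSD)"
  have "E (replicate_pmf NS p) (\<lambda>sd. F (cnt sd) (cnt (RnG NS sd R)))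
      = E (replicate_pmf NS p) (\<lambda>sd. (\<lambda>(a1, a2). F (cnt a1 + cnt a2) (cnt R - cnt a1)) (received sd R, received sd (map Not R)))"
  proof (rule E_cong)
    fix sd assume "sd \<in> set_pmf (replicate_pmf NS p)"
    then have l: "length sd = NS" by (simp add: set_replicate_pmf)
    show "F (cnt sd) (cnt (RnG NS sd R)) = (\<lambda>(a1, a2). F (cnt a1 + cnt a2) (cnt R - cnt a1)) (received sd R, received sd (map Not R))"
    proof -
      have ll: "length sd = length R" using l lR by simp
      have 1: "cnt sd = cnt (received sd R) + cnt (received sd (map Not R))" by (rule cnt_split[OF ll])
      have "cnt (RnG NS sd R) + cnt (received sd R) = cnt R" using cnt_RnG[OF ll] unfolding l .
      then have 2: "cnt (RnG NS sd R) = cnt R - cnt (received sd R)" by arith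
      show ?thesis unfolding 1 2 by simp
    qed
  qed
  also have "\<dots> = E (map_pmf (\<lambda>sd. (received sd R, received sd (map Not R))) (replicate_pmf (length R) p))
       (\<lambda>(a1, a2). F (cnt a1 + cnt a2) (cnt R - cnt a1))"
    using lR by simp
  also have "\<dots> = E (pair_pmf (replicate_pmf (cnt R) p) (replicate_pmf (NS - cnt R) p))
       (\<lambda>(a1, a2). F (cnt a1 + cnt a2) (cnt R - cnt a1))"
    by (subst split2) (auto simp: lR cnt_not cnt_not')
  also have "\<dots> = E (replicate_pmf (cnt R) p) (\<lambda>a1. E (replicate_pmf (NS - cnt R) p) (\<lambda>a2.
       F (cnt a1 + cnt a2) (cnt R - cnt a1)))"
    unfolding pair_pmf_def
    apply (subst E_bind[where B=1], simp add: F split: prod.splits)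
    apply (subst E_bind[where B=1], simp add: F split: prod.splits)
    by simp
  also have "\<dots> = E (replicate_pmf (cnt R) p) (\<lambda>a1. \<Sum>k2\<le>NS - cnt R. Bin k2 (NS - cnt R) eSD * F (cnt a1 + k2) (cnt R - cnt a1))"
    unfolding p_def by (subst E_cnt_bern[OF e]) (rule refl)
  also have "\<dots> = (\<Sum>k1\<le>cnt R. Bin k1 (cnt R) eSD * (\<Sum>k2\<le>NS - cnt R. Bin k2 (NS - cnt R) eSD * F (k1 + k2) (cnt R - k1)))"
    unfolding p_def by (rule E_cnt_bern[OF e, where g="\<lambda>k1. \<Sum>k2\<le>NS - cnt R. Bin k2 (NS - cnt R) eSD * F (k1 + k2) (cnt R - k1)"])
  also have "\<dots> = (\<Sum>k1\<le>cnt R. \<Sum>k2\<le>NS - cnt R. Bin k1 (cnt R) eSD * Bin k2 (NS - cnt R) eSD * F (k1 + k2) (cnt R - k1))"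
    by (simp add: sum_distrib_left mult_ac)
  finally show ?thesis unfolding p_def .
qed

lemma reindex3:
  fixes c :: "nat \<Rightarrow> nat \<Rightarrow> nat \<Rightarrow> real" and g :: "nat \<Rightarrow> nat \<Rightarrow> nat \<Rightarrow> real"
  assumes c: "\<And>m k1 k2. m \<le> NS \<Longrightarrow> k1 \<le> m \<Longrightarrow> k2 \<le> NS - m \<Longrightarrow> c m k1 k2 = g m (k1 + k2) k1"
    and z: "\<And>m mD mRD. m \<le> NS \<Longrightarrow> mD \<le> NS \<Longrightarrow> int m + int mD - int NS \<le> int mRD \<Longrightarrow> mRD \<le> min m mD
               \<Longrightarrow> m + mD < K \<Longrightarrow> g m mD mRD = 0"
  shows "(\<Sum>m\<le>NS. \<Sum>k1\<le>m. \<Sum>k2\<le>NS - m. c m k1 k2)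
    = (\<Sum>(m, mD, mRD) \<in> {(m, mD, mRD). K \<le> m + mD \<and> m \<le> NS \<and> mD \<le> NS
                         \<and> int m + int mD - int NS \<le> int mRD \<and> mRD \<le> min m mD}. g m mD mRD)"
proof -
  define D where "D = (SIGMA m:{..NS}. SIGMA k1:{..m}. {..NS - m})"
  define T0 where "T0 = {(m, mD, mRD). m \<le> NS \<and> mD \<le> NS
                         \<and> int m + int mD - int NS \<le> int mRD \<and> mRD \<le> min m mD}"
  define f where "f = (\<lambda>(m::nat, k1::nat, k2::nat). (m, k1 + k2, k1))"
  have "(\<Sum>m\<le>NS. \<Sum>k1\<le>m. \<Sum>k2\<le>NS - m. c m k1 k2) = (\<Sum>m\<le>NS. \<Sum>(k1, k2)\<in>(SIGMA k1:{..m}. {..NS - m}). c m k1 k2)"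
    by (rule sum.cong[OF refl]) (rule sum.Sigma, auto)
  also have "\<dots> = (\<Sum>(m, k1, k2)\<in>D. c m k1 k2)"
    unfolding D_def by (subst sum.Sigma) (auto simp: case_prod_unfold)
  also have "\<dots> = (\<Sum>x\<in>D. (\<lambda>(m, mD, mRD). g m mD mRD) (f x))"
    by (rule sum.cong[OF refl]) (auto simp: D_def f_def c)
  also have "\<dots> = (\<Sum>y\<in>T0. (\<lambda>(m, mD, mRD). g m mD mRD) y)"
  proof (rule sum.reindex_bij_betw)
    show "bij_betw f D T0"
    proof (rule bij_betwI[where g="\<lambda>(m, mD, mRD). (m, mRD, mD - mRD)"])
      show "f \<in> D \<rightarrow> T0" unfolding D_def T0_def f_def by auto
      show "(\<lambda>(m, mD, mRD). (m, mRD, mD - mRD)) \<in> T0 \<rightarrow> D" unfolding D_def T0_def by auto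
      show "(case f x of (m, mD, mRD) \<Rightarrow> (m, mRD, mD - mRD)) = x" if "x \<in> D" for x
        unfolding f_def by (auto split: prod.splits)
      show "f (case y of (m, mD, mRD) \<Rightarrow> (m, mRD, mD - mRD)) = y" if "y \<in> T0" for y
        using that unfolding f_def T0_def by (auto split: prod.splits)
    qed
  qed
  also have "\<dots> = (\<Sum>(m, mD, mRD) \<in> {(m, mD, mRD). K \<le> m + mD \<and> m \<le> NS \<and> mD \<le> NS
                         \<and> int m + int mD - int NS \<le> int mRD \<and> mRD \<le> min m mD}. g m mD mRD)"
  proof (rule sum.mono_neutral_right)
    show "finite T0"
    proof (rule finite_subset)
      show "T0 \<subseteq> {..NS} \<times> {..NS} \<times> {..NS}" unfolding T0_def by auto
    qed auto
    show "{(m, mD, mRD). K \<le> m + mD \<and> m \<le> NS \<and> mD \<le> NS \<and> int m + int mD - int NS \<le> int mRD \<and> mRD \<le> min m mD} \<subseteq> T0"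
      unfolding T0_def by auto
    show "\<forall>y\<in>T0 - {(m, mD, mRD). K \<le> m + mD \<and> m \<le> NS \<and> mD \<le> NS \<and> int m + int mD - int NS \<le> int mRD \<and> mRD \<le> min m mD}.
            (\<lambda>(m, mD, mRD). g m mD mRD) y = 0"
      unfolding T0_def by (auto intro!: z)
  qed
  finally show ?thesis .
qed

lemma alpha_eq:
  assumes "m \<le> NS" "k1 \<le> m" "k2 \<le> NS - m"
  shows "alpha L NS eSR eSD m (k1 + k2) k1 =
    Bin m NS (\<Prod>j<L. eSR j) * (Bin k1 m eSD * Bin k2 (NS - m) eSD)"
proof -
  define et where "et = (\<Prod>j<L. eSR j)"
  have ch: "real (NS choose m) * real (m choose k1) = real (NS choose k1) * real ((NS - k1) choose (m - k1))"
    using choose_mult[OF assms(2) assms(1)] by (metis of_nat_mult)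
  have ex: "(m - k1) + (NS - m - k2) = NS - (k1 + k2)" using assms by arith
  have "alpha L NS eSR eSD m (k1 + k2) k1 =
     real (NS choose k1) * real ((NS - k1) choose (m - k1)) * real ((NS - m) choose k2)
      * (1 - et) ^ m * et ^ (NS - m) * (1 - eSD) ^ (k1 + k2) * eSD ^ (NS - (k1 + k2))"
    unfolding alpha_def et_def Let_def by simp
  also have "\<dots> = real (NS choose m) * real (m choose k1) * real ((NS - m) choose k2)
      * (1 - et) ^ m * et ^ (NS - m) * ((1 - eSD) ^ k1 * (1 - eSD) ^ k2) * (eSD ^ (m - k1) * eSD ^ (NS - m - k2))"
    unfolding ch power_add[symmetric] ex ..
  also have "\<dots> = Bin m NS et * (Bin k1 m eSD * Bin k2 (NS - m) eSD)"
    unfolding Bin_def by (simp add: mult_ac)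
  finally show ?thesis unfolding et_def .
qed

lemma P2_zero2:
  assumes "m2 < K" "m12 \<le> m2"
  shows "P2 q m1 m2 m12 K = 0"
proof -
  have "{i::nat. int K - int m1 + int m12 \<le> int i \<and> int K - int m2 + int m12 \<le> int i \<and> i \<le> min m12 K} = {}"
    using assms by auto
  note e = this
  show ?thesis unfolding P2_def e by (rule sum.empty)
qed

theorem proposition1:
  fixes T :: "('a::{finite,field} ^ 'k) itself"
    and L NS NR :: nat and eSD :: real and eSR eRD :: "nat \<Rightarrow> real"
  assumes "CARD('k) \<ge> 1" and "L \<ge> 1" and "NS \<ge> CARD('k)" and "NR \<ge> 1"
    and "0 \<le> eSD" and "eSD \<le> 1"
    and "\<And>j. j < L \<Longrightarrow> 0 \<le> eSR j \<and> eSR j \<le> 1"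
    and "\<And>j. j < L \<Longrightarrow> 0 \<le> eRD j \<and> eRD j \<le> 1"
  shows "success_prob L NS NR eSD eSR eRD T
           \<le> upper_bound (real CARD('a)) CARD('k) L NS NR eSD eSR eRD"
proof -
  note eSD = assms(5,6)
  have eSR: "\<forall>j\<in>set [0..<L]. 0 \<le> eSR j \<and> eSR j \<le> 1" using assms(7) by auto
  have eRD: "\<forall>j<L. 0 \<le> eRD j \<and> eRD j \<le> 1" using assms(8) by auto
  define q where "q = real CARD('a)"
  have q0: "q \<noteq> 0" unfolding q_def by simp
  define K where "K = CARD('k)"
  define et where "et = (\<Prod>j<L. eSR j)"
  have etb: "0 \<le> et" "et \<le> 1" unfolding et_def using assms(7)
    by (auto intro!: prod_nonneg prod_le_1)
  define SD where "SD = replicate_pmf NS (bernoulli_pmf (1 - eSD))"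
  define PS where "PS = seq_pmf (map (\<lambda>j. pat NS NR (eSR j) (eRD j)) [0..<L])"
  define RR where "RR = replicate_pmf NS (bernoulli_pmf (1 - et))"
  define RDS where "RDS = seq_pmf (map (\<lambda>j. replicate_pmf NR (bernoulli_pmf (1 - eRD j))) [0..<L])"
  define W where "W mD n = E RDS (\<lambda>rds. Phi q K (sum_list (map cnt rds)) mD n)" for mD n
  have Wb: "\<bar>W mD n\<bar> \<le> 1" for mD n unfolding W_def q_def K_def by (rule E_bound, rule Phi_abs)
  define V where "V m mD mRD = (\<Sum>mp \<in> {mp \<in> PiE {..<L} (\<lambda>_. {..NR}). int K - int mD \<le> int (\<Sum>j<L. mp j)}.
          (\<Prod>j<L. Bin (mp j) NR (eRD j)) *
          P2 q ((\<Sum>j<L. mp j) + mD) (m - mRD + mD) mD K)" for m mD mRD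
  have WV: "W mD (m - mRD) = V m mD mRD" if "mRD \<le> m" for m mD mRD
  proof -
    have "W mD (m - mRD) = (\<Sum>mp\<in>PiE {..<L} (\<lambda>_. {..NR}). (\<Prod>j<L. Bin (mp j) NR (eRD j)) * Phi q K (\<Sum>j<L. mp j) mD (m - mRD))"
      unfolding W_def RDS_def by (rule rd_dist[OF eRD]) (unfold q_def K_def, rule Phi_abs)
    also have "\<dots> = (\<Sum>mp\<in>PiE {..<L} (\<lambda>_. {..NR}). (\<Prod>j<L. Bin (mp j) NR (eRD j)) * P2 q ((\<Sum>j<L. mp j) + mD) (m - mRD + mD) mD K)"
      unfolding Phi_P2[OF q0] ..
    also have "\<dots> = V m mD mRD"
      unfolding V_def
    proof (rule sum.mono_neutral_right)
      show "finite (PiE {..<L} (\<lambda>_. {..NR}))" by (rule finite_PiE) auto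
      show "{mp \<in> PiE {..<L} (\<lambda>_. {..NR}). int K - int mD \<le> int (\<Sum>j<L. mp j)} \<subseteq> PiE {..<L} (\<lambda>_. {..NR})"
        by auto
      show "\<forall>mp\<in>PiE {..<L} (\<lambda>_. {..NR}) - {mp \<in> PiE {..<L} (\<lambda>_. {..NR}). int K - int mD \<le> int (\<Sum>j<L. mp j)}.
          (\<Prod>j<L. Bin (mp j) NR (eRD j)) * P2 q ((\<Sum>j<L. mp j) + mD) (m - mRD + mD) mD K = 0"
      proof
        fix mp assume "mp \<in> PiE {..<L} (\<lambda>_. {..NR}) - {mp \<in> PiE {..<L} (\<lambda>_. {..NR}). int K - int mD \<le> int (\<Sum>j<L. mp j)}"
        then have "\<not> (int K - int mD \<le> int (\<Sum>j<L. mp j))" by blast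
        then have "(\<Sum>j<L. mp j) + mD < K" by linarith
        then have "P2 q ((\<Sum>j<L. mp j) + mD) (m - mRD + mD) mD K = 0" by (intro P2_zero) auto
        then show "(\<Prod>j<L. Bin (mp j) NR (eRD j)) * P2 q ((\<Sum>j<L. mp j) + mD) (m - mRD + mD) mD K = 0" by simp
      qed
    qed
    finally show ?thesis .
  qed
  have "success_prob L NS NR eSD eSR eRD T \<le>
    E SD (\<lambda>sd. E PS (\<lambda>ps. Phi q K (sum_list (map (\<lambda>p. cnt (snd p)) ps)) (cnt sd) (cnt (RnF NS sd ps))))"
    unfolding SD_def PS_def q_def K_def by (rule success_le)
  also have "\<dots> = E SD (\<lambda>sd. E RR (\<lambda>R. W (cnt sd) (cnt (RnG NS sd R))))"
  proof (rule E_cong)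
    fix sd
    have X: "E PS (\<lambda>ps. Phi q K (sum_list (map (\<lambda>p. cnt (snd p)) ps)) (cnt sd) (cnt (RnG NS sd (ORF NS ps))))
      = E (replicate_pmf NS (bernoulli_pmf (1 - prod_list (map eSR [0..<L]))))
          (\<lambda>R. E RDS (\<lambda>rds. Phi q K (sum_list (map cnt rds)) (cnt sd) (cnt (RnG NS sd R))))"
      unfolding PS_def RDS_def
      by (rule pat_dist[where H="\<lambda>R m. Phi q K m (cnt sd) (cnt (RnG NS sd R))", OF eSR])
         (unfold q_def K_def, rule Phi_abs)
    show "E PS (\<lambda>ps. Phi q K (sum_list (map (\<lambda>p. cnt (snd p)) ps)) (cnt sd) (cnt (RnF NS sd ps)))
        = E RR (\<lambda>R. W (cnt sd) (cnt (RnG NS sd R)))"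
      unfolding RnF_RnG X RR_def W_def et_def prod_list_upt ..
  qed
  also have "\<dots> = E RR (\<lambda>R. E SD (\<lambda>sd. W (cnt sd) (cnt (RnG NS sd R))))"
    by (rule E_swap[where B=1]) (rule Wb)
  also have "\<dots> = E RR (\<lambda>R. (\<lambda>m. \<Sum>k1\<le>m. \<Sum>k2\<le>NS - m. Bin k1 m eSD * Bin k2 (NS - m) eSD * W (k1 + k2) (m - k1)) (cnt R))"
  proof (rule E_cong)
    fix R assume "R \<in> set_pmf RR"
    then have l: "length R = NS" unfolding RR_def by (simp add: set_replicate_pmf)
    show "E SD (\<lambda>sd. W (cnt sd) (cnt (RnG NS sd R)))
        = (\<lambda>m. \<Sum>k1\<le>m. \<Sum>k2\<le>NS - m. Bin k1 m eSD * Bin k2 (NS - m) eSD * W (k1 + k2) (m - k1)) (cnt R)"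
      unfolding SD_def by (rule E_sd_split[where F=W, OF eSD l Wb])
  qed
  also have "\<dots> = (\<Sum>m\<le>NS. Bin m NS et * (\<Sum>k1\<le>m. \<Sum>k2\<le>NS - m. Bin k1 m eSD * Bin k2 (NS - m) eSD * W (k1 + k2) (m - k1)))"
    unfolding RR_def by (rule E_cnt_bern[OF etb])
  also have "\<dots> = (\<Sum>m\<le>NS. \<Sum>k1\<le>m. \<Sum>k2\<le>NS - m. Bin m NS et * (Bin k1 m eSD * Bin k2 (NS - m) eSD) * W (k1 + k2) (m - k1))"
    by (simp add: sum_distrib_left mult_ac)
  also have "\<dots> = (\<Sum>(m, mD, mRD) \<in> {(m, mD, mRD). K \<le> m + mD \<and> m \<le> NS \<and> mD \<le> NS
                         \<and> int m + int mD - int NS \<le> int mRD \<and> mRD \<le> min m mD}.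
       alpha L NS eSR eSD m mD mRD * V m mD mRD)"
  proof (rule reindex3)
    fix m k1 k2 assume a: "m \<le> NS" "k1 \<le> m" "k2 \<le> NS - m"
    show "Bin m NS et * (Bin k1 m eSD * Bin k2 (NS - m) eSD) * W (k1 + k2) (m - k1)
        = alpha L NS eSR eSD m (k1 + k2) k1 * V m (k1 + k2) k1"
      unfolding alpha_eq[OF a] WV[OF a(2)] et_def ..
  next
    fix m mD mRD assume a: "mRD \<le> min m mD" "m + mD < K"
    have "P2 q ((\<Sum>j<L. mp j) + mD) (m - mRD + mD) mD K = 0" for mp
      by (rule P2_zero2) (use a in auto)
    then have "V m mD mRD = 0" unfolding V_def by simp
    then show "alpha L NS eSR eSD m mD mRD * V m mD mRD = 0" by simp
  qed
  also have "\<dots> = upper_bound (real CARD('a)) CARD('k) L NS NR eSD eSR eRD"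
    unfolding upper_bound_def V_def q_def K_def ..
  finally show ?thesis .
qed

end
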